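(* Suppose $k=k_n\to\infty$ and $k/n\to0$. Let $E_{n-k+1,n}$ be the $(n-k+1)$-th order statistic of $n$ independent standard exponential random variables, and $F_1,\dots,F_{k-1}$ independent standard exponential random variables independent of $E_{n-k+1,n}$. For $\rho\le0$ let $U_n^{(\rho)}=\frac1k\sum_{i=1}^{k-1}K_\rho\left(1+\frac{F_i}{E_{n-k+1,n}}\right)$. Then for all $\rho\le0$, $$\frac{k^{1/2}}{\sigma_\rho(E_{n-k+1,n})}\left(U_n^{(\rho)}-\mu_\rho(E_{n-k+1,n})\right)\xrightarrow{d}\mathcal N(0,1).$$
   Context: $K_\rho(\lambda)=\int_1^\lambda u^{\rho-1}du$. For $t>0$, $\rho\le0$: $\mu_\rho(t)=\int_0^\infty K_\rho(1+x/t)e^{-x}dx$ and $\sigma_\rho^2(t)=\int_0^\infty K_\rho^2(1+x/t)e^{-x}dx-\mu_\rho^2(t)$, $\sigma_\rho(t)\ge0$. *)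

theory Defs
  imports "HOL-Probability.Probability"
begin

definition Kfun :: "real \<Rightarrow> real \<Rightarrow> real" where
  "Kfun \<rho> lam = (LBINT u=1..lam. u powr (\<rho> - 1))"

definition mu_fun :: "real \<Rightarrow> real \<Rightarrow> real" where
  "mu_fun \<rho> t = (LBINT x:{0..}. Kfun \<rho> (1 + x / t) * exp (- x))"

definition sigma_fun :: "real \<Rightarrow> real \<Rightarrow> real" where
  "sigma_fun \<rho> t = sqrt ((LBINT x:{0..}. (Kfun \<rho> (1 + x / t))\<^sup>2 * exp (- x)) - (mu_fun \<rho> t)\<^sup>2)"

definition order_stat :: "nat \<Rightarrow> (nat \<Rightarrow> real) \<Rightarrow> nat \<Rightarrow> real" where
  "order_stat n x j = sort (map x [0..<n]) ! (j - 1)"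

end

theory Submission
  imports Defs
begin

lemma Kfun_eq: "Kfun r lam = (if 1 \<le> lam then (LBINT u. indicator {u. 1 < u \<and> u < lam} u * u powr (r - 1))
   else - (LBINT u. indicator {u. lam < u \<and> u < 1} u * u powr (r - 1)))"
  unfolding Kfun_def interval_lebesgue_integral_def set_lebesgue_integral_def einterval_def
  by simp
lemma Kfun_meas[measurable]: "Kfun r \<in> borel_measurable borel"
  unfolding Kfun_eq[abs_def] 
  by measurable
lemma mu_meas[measurable]: "mu_fun r \<in> borel_measurable borel"
  unfolding mu_fun_def[abs_def] set_lebesgue_integral_def
  by measurable
lemma sigma_meas[measurable]: "sigma_fun r \<in> borel_measurable borel"
  unfolding sigma_fun_def[abs_def] set_lebesgue_integral_def
  by measurable

lemma powr_bounds:
  fixes u r :: real assumes "1 \<le> u" "r \<le> 0"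
  shows "u powr (r - 1) \<le> 1" "1 - (1 - r) * (u - 1) \<le> u powr (r - 1)"
proof -
  have u: "0 < u" using assms by simp
  have l: "0 \<le> ln u" "ln u \<le> u - 1" using assms by (simp_all add: ln_le_minus_one)
  have e: "(r - 1) * ln u \<le> 0" using l assms by (simp add: mult_nonpos_nonneg)
  show "u powr (r - 1) \<le> 1" using e u by (simp add: powr_def)
  have "1 + (r - 1) * ln u \<le> exp ((r - 1) * ln u)" by (rule exp_ge_add_one_self)
  moreover have "(r - 1) * (u - 1) \<le> (r - 1) * ln u"
    using l assms by (intro mult_left_mono_neg) auto
  ultimately show "1 - (1 - r) * (u - 1) \<le> u powr (r - 1)" using u
    by (simp add: powr_def algebra_simps)
qed

lemma Kfun_bounds:
  fixes y r :: real assumes y: "0 \<le> y" and r: "r \<le> 0"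
  shows "y - (1 - r) * y\<^sup>2 / 2 \<le> Kfun r (1 + y)" "Kfun r (1 + y) \<le> y"
proof -
  have K: "Kfun r (1 + y) = (LBINT u:{1..1+y}. u powr (r - 1))"
    unfolding Kfun_def using interval_integral_Icc[of 1 "1+y" "\<lambda>u. u powr (r - 1)"] y by (simp add: one_ereal_def)
  have cont: "continuous_on {1..1+y} (\<lambda>u::real. u powr (r - 1))"
    by (intro continuous_intros) auto
  have i1: "set_integrable lborel {1..1+y} (\<lambda>u::real. u powr (r - 1))"
    by (rule borel_integrable_atLeastAtMost') (use cont in auto)
  have i2: "set_integrable lborel {1..1+y} (\<lambda>u::real. 1::real)"
    by (rule borel_integrable_atLeastAtMost') (auto intro!: continuous_intros)
  have i3: "set_integrable lborel {1..1+y} (\<lambda>u::real. 1 - (1 - r) * (u - 1))"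
    by (rule borel_integrable_atLeastAtMost') (auto intro!: continuous_intros)
  have c2: "(LBINT u:{1..1+y}. (1::real)) = y"
    using y by (simp add: set_integral_const)  
  have c3: "(LBINT u:{1..1+y}. 1 - (1 - r) * (u - 1)) = y - (1 - r) * y\<^sup>2 / 2"
  proof -
    have "(LBINT u=ereal 1..ereal (1+y). 1 - (1 - r) * (u - 1)) = (\<lambda>u. u - (1 - r) * (u - 1)^2/2) (1+y) - (\<lambda>u. u - (1 - r) * (u - 1)^2/2) 1"
      by (rule interval_integral_FTC_finite)
         (auto intro!: continuous_intros derivative_eq_intros simp: has_real_derivative_iff_has_vector_derivative[symmetric] algebra_simps, simp add: field_simps)
    then show ?thesis using interval_integral_Icc[of 1 "1+y" "\<lambda>u. 1 - (1 - r) * (u - 1)"] y by (simp add: algebra_simps one_ereal_def)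
  qed
  have "(LBINT u:{1..1+y}. u powr (r - 1)) \<le> (LBINT u:{1..1+y}. (1::real))"
    by (rule set_integral_mono[OF i1 i2]) (use powr_bounds r in auto)
  then show "Kfun r (1 + y) \<le> y" using K c2 by simp
  have "(LBINT u:{1..1+y}. 1 - (1 - r) * (u - 1)) \<le> (LBINT u:{1..1+y}. u powr (r - 1))"
    by (rule set_integral_mono[OF i3 i1]) (use powr_bounds r in auto)
  then show "y - (1 - r) * y\<^sup>2 / 2 \<le> Kfun r (1 + y)" using K c3 by simp
qed

definition ExpM :: "real measure" where "ExpM = density lborel (exponential_density 1)"

lemma prob_Ex: "prob_space ExpM"
  unfolding ExpM_def by (rule prob_space_exponential_density) simp

lemma sets_Ex[simp, measurable_cong]: "sets ExpM = sets borel" and space_Ex[simp]: "space ExpM = UNIV"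
  by (simp_all add: ExpM_def)

lemma Ex_integral:
  assumes [measurable]: "f \<in> borel_measurable borel"
  shows "(LBINT x:{0..}. f x * exp (- x)) = integral\<^sup>L ExpM f"
  unfolding ExpM_def set_lebesgue_integral_def
  by (subst integral_density) (auto intro!: Bochner_Integration.integral_cong simp: exponential_density_def indicator_def)

lemma distributed_Ex: "distributed ExpM lborel (\<lambda>x. x) (exponential_density 1)"
  unfolding distributed_def ExpM_def
  by (auto simp: distr_id2[unfolded id_def] )

lemma Ex_moment_int: "integrable ExpM (\<lambda>x. x ^ i)"
  using prob_space.erlang_ith_moment_integrable[OF prob_Ex _ distributed_Ex] by simp

lemma Ex_moment: "integral\<^sup>L ExpM (\<lambda>x. x ^ i) = fact i"
  using prob_space.erlang_ith_moment[OF prob_Ex _ distributed_Ex, of i] by simp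

lemma AE_Ex_nonneg: "AE x in ExpM. 0 \<le> x"
  unfolding ExpM_def
  by (subst AE_density) (auto simp: exponential_density_def)

definition gfun :: "real \<Rightarrow> real \<Rightarrow> real \<Rightarrow> real" where
  "gfun r t x = t * Kfun r (1 + x / t) - x"

lemma gfun_meas[measurable]: "(\<lambda>(t, x). gfun r t x) \<in> borel_measurable (borel \<Otimes>\<^sub>M borel)"
  unfolding gfun_def by measurable

lemma gfun_meas1[measurable]: "gfun r t \<in> borel_measurable borel"
  unfolding gfun_def by measurable

lemma g_bound:
  assumes t: "0 < t" and x: "0 \<le> x" and r: "r \<le> 0"
  shows "gfun r t x \<le> 0" "- ((1 - r) * x\<^sup>2 / (2 * t)) \<le> gfun r t x"
proof -
  have y: "0 \<le> x / t" using t x by simp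
  note b = Kfun_bounds[OF y r]
  have "t * Kfun r (1 + x / t) \<le> t * (x / t)" using b(2) t by (intro mult_left_mono) auto
  then show "gfun r t x \<le> 0" using t by (simp add: gfun_def)
  have "t * (x / t - (1 - r) * (x / t)\<^sup>2 / 2) \<le> t * Kfun r (1 + x / t)" using b(1) t by (intro mult_left_mono) auto
  moreover have "t * (x / t - (1 - r) * (x / t)\<^sup>2 / 2) = x - (1 - r) * x\<^sup>2 / (2 * t)"
    using t by (simp add: field_simps power2_eq_square)
  ultimately show "- ((1 - r) * x\<^sup>2 / (2 * t)) \<le> gfun r t x" by (simp add: gfun_def)
qed

lemma g_abs_bound:
  assumes t: "0 < t" and x: "0 \<le> x" and r: "r \<le> 0"
  shows "\<bar>gfun r t x\<bar> \<le> (1 - r) / (2 * t) * x\<^sup>2"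
  using g_bound[OF assms] by (simp add: abs_if)

context fixes r t :: real assumes r: "r \<le> 0" and t: "0 < t"
begin

lemma int_g: "integrable ExpM (gfun r t)"
proof (rule Bochner_Integration.integrable_bound)
  show "integrable ExpM (\<lambda>x. (1 - r) / (2 * t) * x ^ 2)" using Ex_moment_int by simp
  show "AE x in ExpM. norm (gfun r t x) \<le> norm ((1 - r) / (2 * t) * x ^ 2)"
    using AE_Ex_nonneg by eventually_elim (use g_abs_bound[OF t _ r] r t in \<open>auto simp: abs_mult abs_of_nonneg\<close>)
qed simp

lemma int_g2: "integrable ExpM (\<lambda>x. (gfun r t x)\<^sup>2)"
proof (rule Bochner_Integration.integrable_bound)
  show "integrable ExpM (\<lambda>x. ((1 - r) / (2 * t))\<^sup>2 * x ^ 4)" using Ex_moment_int by simp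
  show "AE x in ExpM. norm ((gfun r t x)\<^sup>2) \<le> norm (((1 - r) / (2 * t))\<^sup>2 * x ^ 4)"
    using AE_Ex_nonneg
  proof eventually_elim
    case (elim x)
    have "\<bar>gfun r t x\<bar>\<^sup>2 \<le> ((1 - r) / (2 * t) * x\<^sup>2)\<^sup>2"
      by (rule power_mono) (use g_abs_bound[OF t elim r] in auto)
    moreover have x4: "((1 - r) / (2 * t) * x\<^sup>2)\<^sup>2 = ((1 - r) / (2 * t))\<^sup>2 * x ^ 4"
      using power_mult[of x 2 2, symmetric] by (simp only: power_mult_distrib) simp
    ultimately show ?case by (simp only: x4 real_norm_def) simp
  qed
qed simp

lemma int_xg: "integrable ExpM (\<lambda>x. x * gfun r t x)"
proof (rule Bochner_Integration.integrable_bound)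
  show "integrable ExpM (\<lambda>x. (1 - r) / (2 * t) * x ^ 3)" using Ex_moment_int by simp
  show "AE x in ExpM. norm (x * gfun r t x) \<le> norm ((1 - r) / (2 * t) * x ^ 3)"
    using AE_Ex_nonneg
  proof eventually_elim
    case (elim x)
    have "x * \<bar>gfun r t x\<bar> \<le> x * ((1 - r) / (2 * t) * x\<^sup>2)"
      by (rule mult_left_mono[OF g_abs_bound[OF t elim r] elim])
    then show ?case using r t elim by (simp add: abs_mult power2_eq_square power3_eq_cube mult_ac abs_of_nonneg)
  qed
qed simp

lemma int_x: "integrable ExpM (\<lambda>x. x)" using Ex_moment_int[of 1] by simp
lemma int_x2: "integrable ExpM (\<lambda>x. x\<^sup>2)" using Ex_moment_int[of 2] by simp
lemma E_x: "integral\<^sup>L ExpM (\<lambda>x. x) = 1" using Ex_moment[of 1] by simp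
lemma E_x2: "integral\<^sup>L ExpM (\<lambda>x. x\<^sup>2) = 2" using Ex_moment[of 2] by (simp add: numeral_2_eq_2)
lemma E_x3: "integral\<^sup>L ExpM (\<lambda>x. x^3) = 6" using Ex_moment[of 3] by (simp add: numeral_3_eq_3)
lemma E_x4: "integral\<^sup>L ExpM (\<lambda>x. x^4) = 24"
  using Ex_moment[of 4] by (simp add: fact_numeral)

lemma EG_bounds: "- ((1 - r) / t) \<le> integral\<^sup>L ExpM (gfun r t)" "integral\<^sup>L ExpM (gfun r t) \<le> 0"
proof -
  have "integral\<^sup>L ExpM (\<lambda>x. - ((1 - r) / (2 * t) * x ^ 2)) \<le> integral\<^sup>L ExpM (gfun r t)"
    by (rule integral_mono_AE) (use Ex_moment_int int_g AE_Ex_nonneg g_bound(2)[OF t _ r] in auto)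
  moreover have "integral\<^sup>L ExpM (\<lambda>x. - ((1 - r) / (2 * t) * x ^ 2)) = - ((1 - r) / t)"
    using E_x2 t by simp (simp add: field_simps)
  ultimately show "- ((1 - r) / t) \<le> integral\<^sup>L ExpM (gfun r t)" by simp
  have "integral\<^sup>L ExpM (gfun r t) \<le> integral\<^sup>L ExpM (\<lambda>x. 0)"
    by (rule integral_mono_AE) (use int_g AE_Ex_nonneg g_bound(1)[OF t _ r] in auto)
  then show "integral\<^sup>L ExpM (gfun r t) \<le> 0" by simp
qed

lemma Exg_bounds: "- (3 * (1 - r) / t) \<le> integral\<^sup>L ExpM (\<lambda>x. x * gfun r t x)" "integral\<^sup>L ExpM (\<lambda>x. x * gfun r t x) \<le> 0"
proof -
  have "integral\<^sup>L ExpM (\<lambda>x. - ((1 - r) / (2 * t) * x ^ 3)) \<le> integral\<^sup>L ExpM (\<lambda>x. x * gfun r t x)"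
  proof (rule integral_mono_AE)
    show "AE x in ExpM. - ((1 - r) / (2 * t) * x ^ 3) \<le> x * gfun r t x"
      using AE_Ex_nonneg
    proof eventually_elim
      case (elim x)
      have "x * (- ((1 - r) * x\<^sup>2 / (2 * t))) \<le> x * gfun r t x"
        using g_bound(2)[OF t elim r] elim by (rule mult_left_mono)
      then show ?case by (simp add: power2_eq_square power3_eq_cube field_simps)
    qed
  qed (use Ex_moment_int int_xg in auto)
  moreover have "integral\<^sup>L ExpM (\<lambda>x. - ((1 - r) / (2 * t) * x ^ 3)) = - (3 * (1 - r) / t)"
    using E_x3 t by simp (simp add: field_simps)
  ultimately show "- (3 * (1 - r) / t) \<le> integral\<^sup>L ExpM (\<lambda>x. x * gfun r t x)" by simp
  have "integral\<^sup>L ExpM (\<lambda>x. x * gfun r t x) \<le> integral\<^sup>L ExpM (\<lambda>x. 0)"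
    by (rule integral_mono_AE) (use int_xg AE_Ex_nonneg g_bound(1)[OF t _ r] in \<open>auto simp: mult_nonneg_nonpos\<close>)
  then show "integral\<^sup>L ExpM (\<lambda>x. x * gfun r t x) \<le> 0" by simp
qed

lemma Eg2_bound: "integral\<^sup>L ExpM (\<lambda>x. (gfun r t x)\<^sup>2) \<le> 6 * (1 - r)\<^sup>2 / t\<^sup>2"
proof -
  have "integral\<^sup>L ExpM (\<lambda>x. (gfun r t x)\<^sup>2) \<le> integral\<^sup>L ExpM (\<lambda>x. ((1 - r) / (2 * t))\<^sup>2 * x ^ 4)"
  proof (rule integral_mono_AE)
    show "AE x in ExpM. (gfun r t x)\<^sup>2 \<le> ((1 - r) / (2 * t))\<^sup>2 * x ^ 4"
      using AE_Ex_nonneg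
    proof eventually_elim
      case (elim x)
      have "\<bar>gfun r t x\<bar>\<^sup>2 \<le> ((1 - r) / (2 * t) * x\<^sup>2)\<^sup>2"
        by (rule power_mono) (use g_abs_bound[OF t elim r] in auto)
      moreover have x4: "((1 - r) / (2 * t) * x\<^sup>2)\<^sup>2 = ((1 - r) / (2 * t))\<^sup>2 * x ^ 4"
      using power_mult[of x 2 2, symmetric] by (simp only: power_mult_distrib) simp
    ultimately show ?case by (simp only: x4 real_norm_def) simp
    qed
  qed (use Ex_moment_int int_g2 in auto)
  also have "\<dots> = 6 * (1 - r)\<^sup>2 / t\<^sup>2" using E_x4 by (simp add: power_divide power_mult_distrib)
  finally show ?thesis .
qed

lemma K_eq: "Kfun r (1 + x / t) = (x + gfun r t x) / t"
  using t by (simp add: gfun_def)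

lemma mu_eq: "t * mu_fun r t = 1 + integral\<^sup>L ExpM (gfun r t)"
proof -
  have "mu_fun r t = integral\<^sup>L ExpM (\<lambda>x. Kfun r (1 + x / t))"
    unfolding mu_fun_def by (rule Ex_integral) measurable
  also have "\<dots> = integral\<^sup>L ExpM (\<lambda>x. (x + gfun r t x) / t)" by (simp add: K_eq)
  also have "\<dots> = (1 + integral\<^sup>L ExpM (gfun r t)) / t"
    using int_x int_g E_x by simp
  finally show ?thesis using t by simp
qed

definition "Qf = t\<^sup>2 * ((LBINT x:{0..}. (Kfun r (1 + x / t))\<^sup>2 * exp (- x)) - (mu_fun r t)\<^sup>2)"

lemma sigma_Qf: "t * sigma_fun r t = sqrt Qf"
  unfolding sigma_fun_def Qf_def using t
  by (simp add: real_sqrt_mult)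

lemma Qf_eq: "Qf = 1 + 2 * integral\<^sup>L ExpM (\<lambda>x. x * gfun r t x) + integral\<^sup>L ExpM (\<lambda>x. (gfun r t x)\<^sup>2)
   - 2 * integral\<^sup>L ExpM (gfun r t) - (integral\<^sup>L ExpM (gfun r t))\<^sup>2"
proof -
  have "(LBINT x:{0..}. (Kfun r (1 + x / t))\<^sup>2 * exp (- x)) = integral\<^sup>L ExpM (\<lambda>x. (Kfun r (1 + x / t))\<^sup>2)"
    by (rule Ex_integral) measurable
  also have "\<dots> = integral\<^sup>L ExpM (\<lambda>x. (x\<^sup>2 + 2 * (x * gfun r t x) + (gfun r t x)\<^sup>2) / t\<^sup>2)"
    by (intro Bochner_Integration.integral_cong) (simp_all add: K_eq power_divide power2_sum algebra_simps)
  also have "\<dots> = (2 + 2 * integral\<^sup>L ExpM (\<lambda>x. x * gfun r t x) + integral\<^sup>L ExpM (\<lambda>x. (gfun r t x)\<^sup>2)) / t\<^sup>2"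
    using int_x2 int_xg int_g2 E_x2 by simp
  finally have 1: "(LBINT x:{0..}. (Kfun r (1 + x / t))\<^sup>2 * exp (- x)) = \<dots>" .
  have 2: "mu_fun r t = (1 + integral\<^sup>L ExpM (gfun r t)) / t" using mu_eq t by (simp add: field_simps)
  show ?thesis unfolding Qf_def 1 2 using t by (simp add: field_simps power2_eq_square)
qed

lemma Qf_bound: assumes "1 \<le> t" shows "\<bar>Qf - 1\<bar> \<le> 15 * (1 - r)\<^sup>2 / t"
proof -
  define u where "u = (1 - r) / t"
  define A where "A = integral\<^sup>L ExpM (gfun r t)"
  define B where "B = integral\<^sup>L ExpM (\<lambda>x. x * gfun r t x)"
  define D where "D = integral\<^sup>L ExpM (\<lambda>x. (gfun r t x)\<^sup>2)"
  have A: "-u \<le> A" "A \<le> 0" using EG_bounds unfolding A_def u_def by auto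
  have B: "-(3*u) \<le> B" "B \<le> 0" using Exg_bounds unfolding B_def u_def by auto
  have D: "D \<le> 6 * u\<^sup>2" "0 \<le> D" using Eg2_bound unfolding D_def u_def
    by (auto simp: power_divide intro!: integral_nonneg_AE)
  have A2: "A\<^sup>2 \<le> u\<^sup>2" "0 \<le> A\<^sup>2" using A by (auto intro!: power2_le_iff_abs_le[THEN iffD2])
  have "\<bar>Qf - 1\<bar> \<le> 6 * u + 6 * u\<^sup>2 + 2 * u + u\<^sup>2"
    unfolding Qf_eq A_def[symmetric] B_def[symmetric] D_def[symmetric] abs_le_iff
    using A B D A2 by linarith
  also have "\<dots> \<le> 15 * (1 - r)\<^sup>2 / t"
  proof -
    have c: "1 \<le> 1 - r" using r by simp
    have u1: "u \<le> (1 - r)\<^sup>2 / t" unfolding u_def using c t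
      by (intro divide_right_mono) (auto simp: power2_eq_square)
    have u2: "u\<^sup>2 \<le> (1 - r)\<^sup>2 / t" unfolding u_def power_divide using assms
      by (intro divide_left_mono) (auto simp: power2_eq_square)
    show ?thesis using u1 u2 by simp
  qed
  finally show ?thesis .
qed

end

definition Phi :: "real \<Rightarrow> real" where "Phi = cdf std_normal_distribution"

lemma Phi_cont: "isCont Phi x"
proof -
  have "emeasure std_normal_distribution {x} = 0"
    by (subst emeasure_density) (auto intro!: nn_integral_null_set)
  then have "measure std_normal_distribution {x} = 0" by (simp add: measure_def)
  interpret real_distribution std_normal_distribution by (rule real_dist_normal_dist)
  show ?thesis unfolding Phi_def using isCont_cdf \<open>measure std_normal_distribution {x} = 0\<close> by simp
qed

definition "Om = PiM (UNIV :: nat set) (\<lambda>_. ExpM)"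

interpretation Omp: product_prob_space "\<lambda>_::nat. ExpM" UNIV
  unfolding product_prob_space_def product_prob_space_axioms_def product_sigma_finite_def
  using prob_Ex prob_space_imp_sigma_finite by blast

lemma prob_Om: "prob_space Om" unfolding Om_def by (rule Omp.P.prob_space_axioms)

lemma distr_Om_comp: "distr Om lborel (\<lambda>\<omega>. \<omega> i) = ExpM"
proof -
  have "distr Om lborel (\<lambda>\<omega>. \<omega> i) = distr Om ExpM (\<lambda>\<omega>. \<omega> i)"
    by (rule distr_cong) auto
  also have "\<dots> = ExpM" unfolding Om_def by (rule Omp.PiM_component) simp
  finally show ?thesis .
qed

lemma distr_Om_comp': "distr Om borel (\<lambda>\<omega>. \<omega> i) = ExpM"
proof -
  have "distr Om borel (\<lambda>\<omega>. \<omega> i) = distr Om lborel (\<lambda>\<omega>. \<omega> i)"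
    by (rule distr_cong) auto
  then show ?thesis using distr_Om_comp by simp
qed

lemma meas_comp[measurable]: "(\<lambda>\<omega>. \<omega> i) \<in> measurable Om borel"
proof -
  have "measurable Om borel = measurable Om ExpM" by (rule measurable_cong_sets) auto
  then show ?thesis using measurable_component_singleton[of i UNIV "\<lambda>_. ExpM"] by (simp add: Om_def)
qed

lemma dist_Om: "distributed Om lborel (\<lambda>\<omega>. \<omega> i) (exponential_density 1)"
  unfolding distributed_def distr_Om_comp by (simp add: ExpM_def)

lemma indep_Om: "prob_space.indep_vars Om (\<lambda>i. borel) (\<lambda>i \<omega>. \<omega> i) UNIV"
proof -
  interpret prob_space Om by (rule prob_Om)
  have "distr Om (PiM UNIV (\<lambda>i. borel)) (\<lambda>x. \<lambda>i\<in>UNIV. x i) = Om"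
  proof -
    have "distr Om (PiM UNIV (\<lambda>i. borel)) (\<lambda>x. \<lambda>i\<in>UNIV. x i) = distr Om Om (\<lambda>x. x)"
      by (rule distr_cong) (auto simp: Om_def intro!: sets_PiM_cong)
    also have "\<dots> = Om" by (rule distr_id)
    finally show ?thesis .
  qed
  also have "Om = PiM UNIV (\<lambda>i::nat. ExpM)" by (simp add: Om_def)
  also have "\<dots> = PiM UNIV (\<lambda>i. distr Om borel (\<lambda>\<omega>. \<omega> i))" by (simp only: distr_Om_comp')
  finally show ?thesis
    by (subst indep_vars_iff_distr_eq_PiM) auto
qed

definition "EC m x = measure (density lborel (erlang_density (m - 1) 1)) {s. (s - real m) / sqrt (real m) \<le> x}"

lemma EC_conv: "(\<lambda>m. EC m x) \<longlonglongrightarrow> Phi x"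
proof -
  interpret prob_space Om by (rule prob_Om)
  have wc: "weak_conv_m (\<lambda>n. distr Om borel (\<lambda>\<omega>. (\<Sum>i<n. \<omega> i - 1) / sqrt (real n*1\<^sup>2))) std_normal_distribution"
  proof (rule central_limit_theorem)
    show "indep_vars (\<lambda>i. borel) (\<lambda>i \<omega>. \<omega> i) UNIV" by (rule indep_Om)
    show "expectation (\<lambda>\<omega>. \<omega> n) = 1" for n using exponential_distributed_expectation[OF _ dist_Om] by simp
    show "integrable Om (\<lambda>\<omega>. (\<omega> n)\<^sup>2)" for n using erlang_ith_moment_integrable[OF _ dist_Om[of n], of 2] by simp
    show "variance (\<lambda>\<omega>. \<omega> n) = 1\<^sup>2" for n using exponential_distributed_variance[OF _ dist_Om] by simp
    show "distr Om borel (\<lambda>\<omega>. \<omega> n) = ExpM" for n by (rule distr_Om_comp')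
  qed simp
  have eq: "cdf (distr Om borel (\<lambda>\<omega>. (\<Sum>i<n. \<omega> i - 1) / sqrt (real n*1\<^sup>2))) x = EC n x" if n: "n \<ge> 1" for n
  proof -
    have D: "distributed Om lborel (\<lambda>\<omega>. \<Sum>i\<in>{..<n}. \<omega> i) (erlang_density (card {..<n} - 1) 1)"
      by (rule exponential_distributed_sum) (use n dist_Om indep_vars_subset[OF indep_Om] in \<open>auto simp: lessThan_empty_iff\<close>)
    have "cdf (distr Om borel (\<lambda>\<omega>. (\<Sum>i<n. \<omega> i - 1) / sqrt (real n*1\<^sup>2))) x
        = measure Om {\<omega>\<in>space Om. (\<Sum>i<n. \<omega> i - 1) / sqrt (real n*1\<^sup>2) \<le> x}"
      unfolding cdf_def by (subst measure_distr) (auto intro!: arg_cong[where f="measure Om"])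
    also have "\<dots> = measure Om ((\<lambda>\<omega>. \<Sum>i\<in>{..<n}. \<omega> i) -` {s. (s - real n) / sqrt (real n) \<le> x} \<inter> space Om)"
      by (intro arg_cong[where f="measure Om"]) (auto simp: sum_subtractf)
    also have "\<dots> = measure (distr Om lborel (\<lambda>\<omega>. \<Sum>i\<in>{..<n}. \<omega> i)) {s. (s - real n) / sqrt (real n) \<le> x}"
      by (subst measure_distr) auto
    also have "\<dots> = EC n x"
      unfolding distributed_distr_eq_density[OF D] EC_def by simp
    finally show ?thesis .
  qed
  have "(\<lambda>n. cdf (distr Om borel (\<lambda>\<omega>. (\<Sum>i<n. \<omega> i - 1) / sqrt (real n*1\<^sup>2))) x) \<longlonglongrightarrow> Phi x"
    using wc Phi_cont unfolding weak_conv_m_def weak_conv_def Phi_def by blast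
  then show ?thesis
    by (rule Lim_transform_eventually) (use eq in \<open>auto intro!: eventually_sequentiallyI[of 1]\<close>)
qed

lemma slut_aux:
  fixes Y Z :: "'a \<Rightarrow> real"
  assumes "prob_space M" and [measurable]: "Y \<in> borel_measurable M" "Z \<in> borel_measurable M"
  shows "measure M {\<omega>\<in>space M. Z \<omega> \<le> x} \<le> measure M {\<omega>\<in>space M. Y \<omega> \<le> x + d} + measure M {\<omega>\<in>space M. d < \<bar>Z \<omega> - Y \<omega>\<bar>}"
    and "measure M {\<omega>\<in>space M. Y \<omega> \<le> x - d} \<le> measure M {\<omega>\<in>space M. Z \<omega> \<le> x} + measure M {\<omega>\<in>space M. d < \<bar>Z \<omega> - Y \<omega>\<bar>}"
proof -
  interpret prob_space M by fact
  have "measure M {\<omega>\<in>space M. Z \<omega> \<le> x} \<le> measure M ({\<omega>\<in>space M. Y \<omega> \<le> x + d} \<union> {\<omega>\<in>space M. d < \<bar>Z \<omega> - Y \<omega>\<bar>})"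
    apply (intro finite_measure_mono)
     apply (auto simp: not_less)[1]
    by measurable
  also have "\<dots> \<le> measure M {\<omega>\<in>space M. Y \<omega> \<le> x + d} + measure M {\<omega>\<in>space M. d < \<bar>Z \<omega> - Y \<omega>\<bar>}"
    by (intro measure_subadditive) auto
  finally show "measure M {\<omega>\<in>space M. Z \<omega> \<le> x} \<le> measure M {\<omega>\<in>space M. Y \<omega> \<le> x + d} + measure M {\<omega>\<in>space M. d < \<bar>Z \<omega> - Y \<omega>\<bar>}" .
  have "measure M {\<omega>\<in>space M. Y \<omega> \<le> x - d} \<le> measure M ({\<omega>\<in>space M. Z \<omega> \<le> x} \<union> {\<omega>\<in>space M. d < \<bar>Z \<omega> - Y \<omega>\<bar>})"
    apply (intro finite_measure_mono)
     apply (auto simp: not_less)[1]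
    by measurable
  also have "\<dots> \<le> measure M {\<omega>\<in>space M. Z \<omega> \<le> x} + measure M {\<omega>\<in>space M. d < \<bar>Z \<omega> - Y \<omega>\<bar>}"
    by (intro measure_subadditive) auto
  finally show "measure M {\<omega>\<in>space M. Y \<omega> \<le> x - d} \<le> measure M {\<omega>\<in>space M. Z \<omega> \<le> x} + measure M {\<omega>\<in>space M. d < \<bar>Z \<omega> - Y \<omega>\<bar>}" .
qed

lemma slutsky:
  fixes Pm :: "nat \<Rightarrow> 'a measure" and Y Z :: "nat \<Rightarrow> 'a \<Rightarrow> real"
  assumes prob: "\<And>n. prob_space (Pm n)"
    and measY: "\<And>n. Y n \<in> borel_measurable (Pm n)" and measZ: "\<And>n. Z n \<in> borel_measurable (Pm n)"
    and Yc: "\<And>y. (\<lambda>n. measure (Pm n) {\<omega>\<in>space (Pm n). Y n \<omega> \<le> y}) \<longlonglongrightarrow> Phi y"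
    and small: "\<And>d. d > 0 \<Longrightarrow> (\<lambda>n. measure (Pm n) {\<omega>\<in>space (Pm n). d < \<bar>Z n \<omega> - Y n \<omega>\<bar>}) \<longlonglongrightarrow> 0"
  shows "(\<lambda>n. measure (Pm n) {\<omega>\<in>space (Pm n). Z n \<omega> \<le> x}) \<longlonglongrightarrow> Phi x"
proof (rule tendstoI)
  fix e :: real assume e: "0 < e"
  obtain d where d: "d > 0" and dd: "\<And>y. \<bar>y - x\<bar> < d \<Longrightarrow> \<bar>Phi y - Phi x\<bar> < e / 2"
    using Phi_cont[of x] e unfolding continuous_at_eps_delta dist_real_def
    by (metis half_gt_zero)
  define d' where "d' = d / 2"
  have d': "0 < d'" "\<bar>(x + d') - x\<bar> < d" "\<bar>(x - d') - x\<bar> < d" using d by (auto simp: d'_def)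
  have 1: "eventually (\<lambda>n. measure (Pm n) {\<omega>\<in>space (Pm n). Y n \<omega> \<le> x + d'} < Phi (x + d') + e / 4) sequentially"
    using Yc[of "x + d'"] e by (intro order_tendstoD) auto
  have 2: "eventually (\<lambda>n. Phi (x - d') - e / 4 < measure (Pm n) {\<omega>\<in>space (Pm n). Y n \<omega> \<le> x - d'}) sequentially"
    using Yc[of "x - d'"] e by (intro order_tendstoD) auto
  have 3: "eventually (\<lambda>n. measure (Pm n) {\<omega>\<in>space (Pm n). d' < \<bar>Z n \<omega> - Y n \<omega>\<bar>} < e / 4) sequentially"
    using small[OF d'(1)] e by (intro order_tendstoD) auto
  show "eventually (\<lambda>n. dist (measure (Pm n) {\<omega>\<in>space (Pm n). Z n \<omega> \<le> x}) (Phi x) < e) sequentially"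
    using 1 2 3
  proof eventually_elim
    case (elim n)
    note a = slut_aux[OF prob measY measZ, of n x d']
    have "\<bar>Phi (x + d') - Phi x\<bar> < e / 2" "\<bar>Phi (x - d') - Phi x\<bar> < e / 2" using dd d' by auto
    then show ?case using a elim unfolding dist_real_def abs_less_iff by linarith
  qed
qed

lemma sorted_count:
  fixes xs :: "real list"
  assumes "sorted xs" "1 \<le> j" "j \<le> length xs" "xs ! (j - 1) \<le> C"
  shows "real j \<le> (\<Sum>l<length xs. if xs ! l \<le> C then 1 else 0)"
proof -
  have "(\<Sum>l<length xs. if xs ! l \<le> C then 1 else (0::real)) \<ge> (\<Sum>l<j. if xs ! l \<le> C then 1 else 0)"
    using assms(3) by (intro sum_mono2) auto
  moreover have "(\<Sum>l<j. if xs ! l \<le> C then 1 else (0::real)) = (\<Sum>l<j. 1)"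
  proof (intro sum.cong refl)
    fix l assume "l \<in> {..<j}"
    then have "xs ! l \<le> xs ! (j - 1)" using assms by (intro sorted_nth_mono) auto
    then show "(if xs ! l \<le> C then 1 else (0::real)) = 1" using assms(4) by simp
  qed
  ultimately show ?thesis by simp
qed

lemma sum_sort_map:
  fixes f :: "real \<Rightarrow> real"
  shows "(\<Sum>l<length (sort xs). f (sort xs ! l)) = sum_list (map f xs)"
proof -
  have "(\<Sum>l<length (sort xs). f (sort xs ! l)) = sum_list (map f (sort xs))"
    by (simp add: sum_list_sum_nth atLeast0LessThan)
  also have "\<dots> = sum_mset (image_mset f (mset (sort xs)))" by (simp add: sum_mset_sum_list[symmetric])
  also have "\<dots> = sum_list (map f xs)" by (simp add: sum_mset_sum_list[symmetric])
  finally show ?thesis .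
qed

lemma order_stat_count:
  assumes "1 \<le> j" "j \<le> n" "order_stat n x j \<le> C"
  shows "real j \<le> (\<Sum>i<n. if x i \<le> C then 1 else 0)"
proof -
  let ?ys = "sort (map x [0..<n])"
  have "real j \<le> (\<Sum>l<length ?ys. if ?ys ! l \<le> C then 1 else 0)"
    using assms by (intro sorted_count) (auto simp: order_stat_def)
  also have "\<dots> = sum_list (map (\<lambda>v. if v \<le> C then 1 else 0) (map x [0..<n]))"
    by (rule sum_sort_map)
  also have "\<dots> = (\<Sum>i<n. if x i \<le> C then 1 else 0)"
    by (simp add: sum_set_upt_conv_sum_list_nat[symmetric] atLeast0LessThan comp_def)
  finally show ?thesis .
qed

lemma T_large:
  fixes M :: "nat \<Rightarrow> 'a measure" and k :: "nat \<Rightarrow> nat" and X :: "nat \<Rightarrow> nat \<Rightarrow> 'a \<Rightarrow> real"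
  assumes k_inf: "filterlim k at_top sequentially"
    and k_n: "(\<lambda>n. real (k n) / real n) \<longlonglongrightarrow> 0"
    and prob: "\<And>n. prob_space (M n)"
    and X_exp: "\<And>n i. i < n \<Longrightarrow> distributed (M n) lborel (X n i) (exponential_density 1)"
    and X_indep: "\<And>n. prob_space.indep_vars (M n) (\<lambda>_. borel) (X n) {..<n}"
    and C: "0 \<le> C"
  shows "(\<lambda>n. measure (M n) {\<omega> \<in> space (M n). order_stat n (\<lambda>j. X n j \<omega>) (n - k n + 1) \<le> C}) \<longlonglongrightarrow> 0"
proof (rule Lim_null_comparison)
  define p where "p = exp (- C)"
  have p: "0 < p" "p \<le> 1" using C by (auto simp: p_def)
  have ev1: "eventually (\<lambda>n. real (k n) / real n < p / 2) sequentially"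
    using k_n p by (intro order_tendstoD) auto
  have ev2: "eventually (\<lambda>n. 1 \<le> k n) sequentially"
    using k_inf by (simp add: filterlim_at_top)
  have ev3: "eventually (\<lambda>n. 1 \<le> n) sequentially" by (rule eventually_ge_at_top)
  show "eventually (\<lambda>n. norm (measure (M n) {\<omega> \<in> space (M n). order_stat n (\<lambda>j. X n j \<omega>) (n - k n + 1) \<le> C})
      \<le> exp (- (p\<^sup>2 / 2)) ^ n) sequentially"
    using ev1 ev2 ev3
  proof eventually_elim
    case (elim n)
    interpret prob_space "M n" by (rule prob)
    have kn: "real (k n) < real n * p / 2" using elim by (simp add: field_simps)
    have "real n * p \<le> real n * 1" by (rule mult_left_mono) (use p in auto)
    then have "real (k n) < real n" using kn p by linarith
    then have kn2: "k n \<le> n" by simp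
    define Y :: "nat \<Rightarrow> 'a \<Rightarrow> real" where "Y i = indicator {\<omega>. C < X n i \<omega>}" for i
    have rvX[measurable]: "i < n \<Longrightarrow> random_variable borel (X n i)" for i
      using X_exp[of i n] by (auto dest: distributed_measurable)
    have EY: "i < n \<Longrightarrow> expectation (Y i) = p" for i
    proof -
      assume i: "i < n"
      have "expectation (Y i) = prob {\<omega> \<in> space (M n). C < X n i \<omega>}" unfolding Y_def
        by (subst Bochner_Integration.integral_indicator) (auto intro!: arg_cong[where f=prob])
      also have "\<dots> = p" using exponential_distributedD_gt[OF X_exp[OF i] C] by (simp add: p_def)
      finally show ?thesis .
    qed
    interpret H: Hoeffding_ineq "M n" "{..<n}" Y "\<lambda>_. 0" "\<lambda>_. 1" "\<Sum>i<n. expectation (Y i)"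
    proof unfold_locales
      show "indep_vars (\<lambda>_. borel) Y {..<n}"
        unfolding Y_def
        using indep_vars_compose2[OF X_indep[of n], of "\<lambda>i v. indicator {C<..} v" "\<lambda>_. borel"]
        by (rule indep_vars_cong[THEN iffD1, rotated 3]) (auto simp: indicator_def)
      show "AE x in M n. Y i x \<in> {0..1}" for i by (auto simp: Y_def indicator_def)
    qed auto
    have mu: "(\<Sum>i<n. expectation (Y i)) = real n * p" using EY by simp
    have sub: "{\<omega> \<in> space (M n). order_stat n (\<lambda>j. X n j \<omega>) (n - k n + 1) \<le> C}
        \<subseteq> {x\<in>space (M n). (\<Sum>i\<in>{..<n}. Y i x) \<le> (\<Sum>i<n. expectation (Y i)) - real n * p / 2}"
    proof clarify
      fix \<omega> assume \<omega>: "\<omega> \<in> space (M n)" and T: "order_stat n (\<lambda>j. X n j \<omega>) (n - k n + 1) \<le> C"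
      have cnt: "real (n - k n + 1) \<le> (\<Sum>i<n. if X n i \<omega> \<le> C then 1 else 0)"
        using elim kn2 T by (intro order_stat_count) auto
      have "(\<Sum>i<n. Y i \<omega>) = (\<Sum>i<n. 1 - (if X n i \<omega> \<le> C then 1 else 0))"
        using \<omega> by (intro sum.cong) (auto simp: Y_def indicator_def)
      also have "\<dots> = real n - (\<Sum>i<n. if X n i \<omega> \<le> C then 1 else 0)" by (simp add: sum_subtractf)
      also have "\<dots> \<le> real (k n) - 1" using cnt kn2 elim by (simp add: of_nat_diff)
      finally have s: "(\<Sum>i<n. Y i \<omega>) \<le> real (k n) - 1" .
      show "(\<Sum>i\<in>{..<n}. Y i \<omega>) \<le> (\<Sum>i<n. expectation (Y i)) - real n * p / 2"
        unfolding mu using s kn by linarith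
    qed
    have "measure (M n) {\<omega> \<in> space (M n). order_stat n (\<lambda>j. X n j \<omega>) (n - k n + 1) \<le> C}
        \<le> prob {x\<in>space (M n). (\<Sum>i\<in>{..<n}. Y i x) \<le> (\<Sum>i<n. expectation (Y i)) - real n * p / 2}"
      by (rule finite_measure_mono[OF sub]) (unfold Y_def, measurable)
    also have "\<dots> \<le> exp (-2 * (real n * p / 2)\<^sup>2 / (\<Sum>i\<in>{..<n}. (1 - 0)\<^sup>2))"
      by (rule H.Hoeffding_ineq_le) (use p elim in auto)
    also have "\<dots> = exp (real n * (- (p\<^sup>2 / 2)))"
      using elim by (simp add: power2_eq_square field_simps)
    also have "\<dots> = exp (- (p\<^sup>2 / 2)) ^ n" by (rule exp_of_nat_mult)
    finally show ?case by simp
  qed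
  show "(\<lambda>n. exp (- (p\<^sup>2 / 2)) ^ n) \<longlonglongrightarrow> 0"
    by (rule LIMSEQ_realpow_zero) (use p in auto)
qed

lemma indep_section_bound:
  assumes P: "prob_space M" and ind: "prob_space.indep_var M S X N Y" and Pm: "Pset \<in> sets (S \<Otimes>\<^sub>M N)"
    and B: "0 \<le> B" and bnd: "\<And>x. x \<in> space S \<Longrightarrow> measure M {\<omega>\<in>space M. (x, Y \<omega>) \<in> Pset} \<le> B"
  shows "measure M {\<omega>\<in>space M. (X \<omega>, Y \<omega>) \<in> Pset} \<le> B"
proof -
  interpret prob_space M by fact
  have rv: "random_variable S X" "random_variable N Y"
    and eq: "distr M S X \<Otimes>\<^sub>M distr M N Y = distr M (S \<Otimes>\<^sub>M N) (\<lambda>x. (X x, Y x))"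
    using ind unfolding indep_var_distribution_eq by auto
  interpret DY: prob_space "distr M N Y" by (rule prob_space_distr) fact
  have rvp: "(\<lambda>x. (X x, Y x)) \<in> measurable M (S \<Otimes>\<^sub>M N)" using rv by measurable
  have "emeasure M {\<omega>\<in>space M. (X \<omega>, Y \<omega>) \<in> Pset} = emeasure (distr M (S \<Otimes>\<^sub>M N) (\<lambda>x. (X x, Y x))) Pset"
    using rvp Pm by (subst emeasure_distr) (auto intro!: arg_cong[where f="emeasure M"])
  also have "\<dots> = emeasure (distr M S X \<Otimes>\<^sub>M distr M N Y) Pset" by (simp add: eq)
  also have "\<dots> = (\<integral>\<^sup>+x. emeasure (distr M N Y) (Pair x -` Pset) \<partial>distr M S X)"
    using Pm by (intro DY.emeasure_pair_measure_alt) (simp add: sets_pair_measure_cong[OF sets_distr sets_distr])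
  also have "\<dots> \<le> (\<integral>\<^sup>+x. ennreal B \<partial>distr M S X)"
  proof (intro nn_integral_mono)
    fix x assume x: "x \<in> space (distr M S X)"
    have sec: "Pair x -` Pset \<in> sets N"
      using Pm x by (intro sets_Pair1) auto
    have "emeasure (distr M N Y) (Pair x -` Pset) = emeasure M (Y -` (Pair x -` Pset) \<inter> space M)"
      using sec rv by (subst emeasure_distr) auto
    also have "\<dots> = ennreal (measure M {\<omega>\<in>space M. (x, Y \<omega>) \<in> Pset})"
      by (simp add: emeasure_eq_measure Int_def conj_commute)
    also have "\<dots> \<le> ennreal B" using bnd x by (intro ennreal_leI) auto
    finally show "emeasure (distr M N Y) (Pair x -` Pset) \<le> ennreal B" .
  qed
  also have "\<dots> = ennreal B"
  proof -
    interpret DX: prob_space "distr M S X" by (rule prob_space_distr) (fact rv)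
    show ?thesis using DX.emeasure_space_1 by simp
  qed
  finally show ?thesis using B by (simp add: emeasure_eq_measure)
qed

lemma indep_pair_from_vars:
  assumes "prob_space M" "prob_space.indep_vars M (\<lambda>_. borel) Z I" "i \<in> I" "j \<in> I" "i \<noteq> j"
  shows "prob_space.indep_var M borel (Z i) borel (Z j)"
proof -
  interpret prob_space M by fact
  have "indep_var borel ((\<lambda>f. f i) \<circ> (\<lambda>\<omega>. restrict (\<lambda>i. Z i \<omega>) {i}))
                  borel ((\<lambda>f. f j) \<circ> (\<lambda>\<omega>. restrict (\<lambda>i. Z i \<omega>) {j}))"
    using assms by (intro indep_var_compose[OF indep_var_restrict[OF assms(2)]]) auto
  also have "((\<lambda>f. f i) \<circ> (\<lambda>\<omega>. restrict (\<lambda>i. Z i \<omega>) {i})) = Z i" by auto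
  also have "((\<lambda>f. f j) \<circ> (\<lambda>\<omega>. restrict (\<lambda>i. Z i \<omega>) {j})) = Z j" by auto
  finally show ?thesis .
qed

lemma sum_sq_indep:
  fixes Z :: "'i \<Rightarrow> 'a \<Rightarrow> real"
  assumes P: "prob_space M" and fin: "finite I" and ind: "prob_space.indep_vars M (\<lambda>_. borel) Z I"
    and sq: "\<And>i. i \<in> I \<Longrightarrow> integrable M (\<lambda>\<omega>. (Z i \<omega>)\<^sup>2)"
    and E0: "\<And>i. i \<in> I \<Longrightarrow> integral\<^sup>L M (Z i) = 0"
  shows "integrable M (\<lambda>\<omega>. (\<Sum>i\<in>I. Z i \<omega>)\<^sup>2)"
    "integral\<^sup>L M (\<lambda>\<omega>. (\<Sum>i\<in>I. Z i \<omega>)\<^sup>2) = (\<Sum>i\<in>I. integral\<^sup>L M (\<lambda>\<omega>. (Z i \<omega>)\<^sup>2))"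
proof -
  interpret prob_space M by fact
  have rv[measurable]: "i \<in> I \<Longrightarrow> Z i \<in> borel_measurable M" for i
    using ind unfolding indep_vars_def by blast
  have int1: "integrable M (Z i)" if "i \<in> I" for i
    using square_integrable_imp_integrable[OF rv[OF that] sq[OF that]] .
  have intij: "integrable M (\<lambda>\<omega>. Z i \<omega> * Z j \<omega>)" and Eij: "integral\<^sup>L M (\<lambda>\<omega>. Z i \<omega> * Z j \<omega>) = (if i = j then integral\<^sup>L M (\<lambda>\<omega>. (Z i \<omega>)\<^sup>2) else 0)"
    if ij: "i \<in> I" "j \<in> I" for i j
  proof -
    show "integrable M (\<lambda>\<omega>. Z i \<omega> * Z j \<omega>)"
    proof (cases "i = j")
      case True then show ?thesis using sq[OF ij(1)] by (simp add: power2_eq_square)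
    next
      case False
      show ?thesis by (rule indep_var_integrable[OF indep_pair_from_vars[OF P ind ij False] int1 int1]) (use ij in auto)
    qed
    show "integral\<^sup>L M (\<lambda>\<omega>. Z i \<omega> * Z j \<omega>) = (if i = j then integral\<^sup>L M (\<lambda>\<omega>. (Z i \<omega>)\<^sup>2) else 0)"
    proof (cases "i = j")
      case True then show ?thesis by (simp add: power2_eq_square)
    next
      case False
      have "integral\<^sup>L M (\<lambda>\<omega>. Z i \<omega> * Z j \<omega>) = integral\<^sup>L M (Z i) * integral\<^sup>L M (Z j)"
        by (rule indep_var_lebesgue_integral[OF indep_pair_from_vars[OF P ind ij False] int1 int1]) (use ij in auto)
      then show ?thesis using False E0 ij by simp
    qed
  qed
  have eq: "(\<lambda>\<omega>. (\<Sum>i\<in>I. Z i \<omega>)\<^sup>2) = (\<lambda>\<omega>. \<Sum>i\<in>I. \<Sum>j\<in>I. Z i \<omega> * Z j \<omega>)"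
    by (simp add: power2_eq_square sum_product)
  show "integrable M (\<lambda>\<omega>. (\<Sum>i\<in>I. Z i \<omega>)\<^sup>2)"
    unfolding eq using intij by (intro Bochner_Integration.integrable_sum) auto
  have "integral\<^sup>L M (\<lambda>\<omega>. (\<Sum>i\<in>I. Z i \<omega>)\<^sup>2) = (\<Sum>i\<in>I. \<Sum>j\<in>I. integral\<^sup>L M (\<lambda>\<omega>. Z i \<omega> * Z j \<omega>))"
  proof -
    have "integral\<^sup>L M (\<lambda>\<omega>. \<Sum>i\<in>I. \<Sum>j\<in>I. Z i \<omega> * Z j \<omega>) = (\<Sum>i\<in>I. integral\<^sup>L M (\<lambda>\<omega>. \<Sum>j\<in>I. Z i \<omega> * Z j \<omega>))"
      by (rule Bochner_Integration.integral_sum) (use intij in \<open>auto intro!: Bochner_Integration.integrable_sum\<close>)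
    also have "\<dots> = (\<Sum>i\<in>I. \<Sum>j\<in>I. integral\<^sup>L M (\<lambda>\<omega>. Z i \<omega> * Z j \<omega>))"
      by (intro sum.cong refl Bochner_Integration.integral_sum) (use intij in auto)
    finally show ?thesis unfolding eq .
  qed
  also have "\<dots> = (\<Sum>i\<in>I. \<Sum>j\<in>I. if i = j then integral\<^sup>L M (\<lambda>\<omega>. (Z i \<omega>)\<^sup>2) else 0)"
    using Eij by (intro sum.cong) auto
  also have "\<dots> = (\<Sum>i\<in>I. integral\<^sup>L M (\<lambda>\<omega>. (Z i \<omega>)\<^sup>2))"
    using fin by (simp add: sum.delta)
  finally show "integral\<^sup>L M (\<lambda>\<omega>. (\<Sum>i\<in>I. Z i \<omega>)\<^sup>2) = (\<Sum>i\<in>I. integral\<^sup>L M (\<lambda>\<omega>. (Z i \<omega>)\<^sup>2))" .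
qed

lemma distr_exp_Ex:
  assumes "distributed M lborel X (exponential_density 1)"
  shows "distr M lborel X = ExpM"
  using distributed_distr_eq_density[OF assms] by (simp add: ExpM_def)

lemma dist_int:
  fixes h :: "real \<Rightarrow> real"
  assumes D: "distributed M lborel X (exponential_density 1)" and h[measurable]: "h \<in> borel_measurable borel"
  shows "integral\<^sup>L M (\<lambda>\<omega>. h (X \<omega>)) = integral\<^sup>L ExpM h"
    "integrable M (\<lambda>\<omega>. h (X \<omega>)) \<longleftrightarrow> integrable ExpM h"
proof -
  have X[measurable]: "X \<in> measurable M lborel" using distributed_measurable[OF D] .
  show "integral\<^sup>L M (\<lambda>\<omega>. h (X \<omega>)) = integral\<^sup>L ExpM h"
    using integral_distr[OF X, of h] by (simp add: distr_exp_Ex[OF D])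
  show "integrable M (\<lambda>\<omega>. h (X \<omega>)) \<longleftrightarrow> integrable ExpM h"
    using integrable_distr_eq[OF X, of h] by (simp add: distr_exp_Ex[OF D])
qed

lemma det_bound:
  fixes r t :: real and F :: "nat \<Rightarrow> real" and I :: "nat set" and kk :: nat
  assumes r: "r \<le> 0" and t1: "1 \<le> t" and tc: "30 * (1 - r)\<^sup>2 \<le> t"
    and fin: "finite I" and card: "card I + 1 = kk" and m1: "1 \<le> card I"
  shows "\<bar>sqrt (real kk) / sigma_fun r t * ((1 / real kk) * (\<Sum>i\<in>I. Kfun r (1 + F i / t)) - mu_fun r t)
          - ((\<Sum>i\<in>I. F i) - real (card I)) / sqrt (real (card I))\<bar>
     \<le> \<bar>((\<Sum>i\<in>I. F i) - real (card I)) / sqrt (real (card I))\<bar> * (2 / real kk + 30 * (1 - r)\<^sup>2 / t)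
        + 2 * \<bar>\<Sum>i\<in>I. (gfun r t (F i) - integral\<^sup>L ExpM (gfun r t))\<bar> / sqrt (real kk) + 2 / sqrt (real kk)"
proof -
  define c where "c = 1 - r"
  have c1: "1 \<le> c" using r by (simp add: c_def)
  have t: "0 < t" using t1 by simp
  define m where "m = card I"
  define EG where "EG = integral\<^sup>L ExpM (gfun r t)"
  define b where "b = 1 + EG"
  define Q where "Q = Qf r t"
  define a where "a = sqrt Q"
  define S where "S = (\<Sum>i\<in>I. F i)"
  define G where "G = (\<Sum>i\<in>I. gfun r t (F i))"
  define W where "W = (\<Sum>i\<in>I. (gfun r t (F i) - EG))"
  define A where "A = (S - real m) / sqrt (real m)"
  have m: "1 \<le> m" "real kk = real m + 1" using m1 card by (auto simp: m_def)
  have kk: "1 \<le> real kk" using m by simp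
  have EGb: "- (c / t) \<le> EG" "EG \<le> 0" using EG_bounds[OF r t] by (auto simp: EG_def c_def)
  have "c \<le> 30 * c\<^sup>2" using c1 by (simp add: power2_eq_square)
  then have ct: "c / t \<le> 1" using tc t by (simp add: c_def)
  have b: "0 \<le> b" "b \<le> 1" using EGb ct by (auto simp: b_def)
  have Qb: "\<bar>Q - 1\<bar> \<le> 15 * c\<^sup>2 / t" using Qf_bound[OF r t t1] by (simp add: Q_def c_def)
  have "15 * c\<^sup>2 / t \<le> 1 / 2" using tc t by (simp add: c_def field_simps)
  then have Q2: "1 / 2 \<le> Q" using Qb by (simp add: abs_le_iff)
  have a2: "a\<^sup>2 = Q" using Q2 by (simp add: a_def)
  have a0: "0 < a" using Q2 by (simp add: a_def)
  have ah: "1 / 2 \<le> a"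
  proof (rule ccontr)
    assume "\<not> 1 / 2 \<le> a"
    then have "a\<^sup>2 < (1/2)\<^sup>2" using a0 by (intro power_strict_mono) auto
    then show False using a2 Q2 by (simp add: power2_eq_square)
  qed
  have a1: "\<bar>a - 1\<bar> \<le> \<bar>Q - 1\<bar>"
  proof -
    have e: "(a - 1) * (a + 1) = Q - 1" using a2 by (simp add: power2_eq_square algebra_simps)
    have "\<bar>a - 1\<bar> * (a + 1) = \<bar>(a - 1) * (a + 1)\<bar>" using a0 by (simp add: abs_mult)
    then have "\<bar>a - 1\<bar> * (a + 1) = \<bar>Q - 1\<bar>" using e by simp
    moreover have "\<bar>a - 1\<bar> \<le> \<bar>a - 1\<bar> * (a + 1)" using a0 by (simp add: mult_le_cancel_left1)
    ultimately show ?thesis by simp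
  qed
  have sig: "sigma_fun r t = a / t" using sigma_Qf[OF r t] t by (simp add: a_def Q_def field_simps)
  have mu: "mu_fun r t = b / t" using mu_eq[OF r t] t by (simp add: b_def EG_def field_simps)
  have Ksum: "(\<Sum>i\<in>I. Kfun r (1 + F i / t)) = (S + G) / t"
    by (simp add: K_eq[OF r t] S_def G_def sum_divide_distrib[symmetric] sum.distrib)
  have WG: "W = G - real m * EG" by (simp add: W_def G_def sum_subtractf m_def)
  have skk: "0 < sqrt (real kk)" using kk by simp
  have sm: "0 < sqrt (real m)" using m by simp
  have Zeq: "sqrt (real kk) / sigma_fun r t * ((1 / real kk) * (\<Sum>i\<in>I. Kfun r (1 + F i / t)) - mu_fun r t)
      = ((S - real m) + W - b) / (a * sqrt (real kk))"
  proof -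
    have "sqrt (real kk) / sigma_fun r t * ((1 / real kk) * (\<Sum>i\<in>I. Kfun r (1 + F i / t)) - mu_fun r t)
        = sqrt (real kk) / a * ((S + G) / real kk - b)"
      unfolding sig mu Ksum using t a0 kk by (simp add: field_simps)
    also have "\<dots> = (S + G - real kk * b) / (a * sqrt (real kk))"
      using kk skk a0 by (simp add: field_simps)
    also have "S + G - real kk * b = (S - real m) + W - b"
      unfolding WG b_def m(2) by (simp add: algebra_simps)
    finally show ?thesis .
  qed
  define q where "q = sqrt (real m) / sqrt (real kk)"
  have q: "0 \<le> q" "q \<le> 1" "1 - q \<le> 1 / real kk"
  proof -
    show "0 \<le> q" by (simp add: q_def)
    have qq: "q\<^sup>2 = real m / real kk" unfolding q_def by (simp add: power_divide)
    have "real m / real kk \<le> 1" using m kk by simp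
    then show q1: "q \<le> 1" unfolding q_def by (simp add: real_sqrt_le_1_iff real_sqrt_divide[symmetric])
    have "q\<^sup>2 \<le> q" using q1 \<open>0 \<le> q\<close> by (simp add: power2_eq_square mult_left_le)
    moreover have "1 - q\<^sup>2 = 1 / real kk" unfolding qq using m kk by (simp add: field_simps)
    ultimately show "1 - q \<le> 1 / real kk" by simp
  qed
  have Aeq: "S - real m = A * sqrt (real m)" using sm by (simp add: A_def)
  have diff: "((S - real m) + W - b) / (a * sqrt (real kk)) - A = A * (q / a - 1) + (W - b) / (a * sqrt (real kk))"
    unfolding Aeq q_def using a0 skk by (simp add: field_simps)
  have qa: "\<bar>q / a - 1\<bar> \<le> 2 / real kk + 30 * c\<^sup>2 / t"
  proof -
    have "\<bar>q / a - 1\<bar> = \<bar>q - a\<bar> / a" using a0 by (simp add: field_simps abs_divide)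
    also have "\<dots> \<le> 2 * \<bar>q - a\<bar>"
    proof -
      have "1 * \<bar>q - a\<bar> \<le> (2 * a) * \<bar>q - a\<bar>" by (rule mult_right_mono) (use ah in auto)
      then show ?thesis using a0 by (simp add: divide_le_eq mult_ac)
    qed
    also have "\<bar>q - a\<bar> \<le> (1 - q) + \<bar>a - 1\<bar>" using q by arith
    finally show ?thesis using q(3) a1 Qb by simp
  qed
  have "\<bar>(W - b) / (a * sqrt (real kk))\<bar> \<le> 2 * \<bar>W\<bar> / sqrt (real kk) + 2 / sqrt (real kk)"
  proof -
    have "\<bar>(W - b) / (a * sqrt (real kk))\<bar> = \<bar>W - b\<bar> / a / sqrt (real kk)" using a0 skk
      by (simp add: abs_divide abs_mult)
    also have "\<dots> \<le> (2 * (\<bar>W\<bar> + 1)) / sqrt (real kk)"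
    proof (intro divide_right_mono)
      have "\<bar>W - b\<bar> \<le> \<bar>W\<bar> + 1" using b by arith
      moreover have "1 * (\<bar>W\<bar> + 1) \<le> (2 * a) * (\<bar>W\<bar> + 1)" by (rule mult_right_mono) (use ah in auto)
      ultimately show "\<bar>W - b\<bar> / a \<le> 2 * (\<bar>W\<bar> + 1)" using a0 by (simp add: divide_le_eq mult_ac)
    qed simp
    finally show ?thesis by (simp add: add_divide_distrib distrib_left)
  qed
  moreover have "\<bar>A * (q / a - 1)\<bar> \<le> \<bar>A\<bar> * (2 / real kk + 30 * c\<^sup>2 / t)"
    unfolding abs_mult by (rule mult_left_mono[OF qa]) simp
  ultimately have fin_b: "\<bar>((S - real m) + W - b) / (a * sqrt (real kk)) - A\<bar> \<le> \<bar>A\<bar> * (2 / real kk + 30 * c\<^sup>2 / t) + 2 * \<bar>W\<bar> / sqrt (real kk) + 2 / sqrt (real kk)"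
    unfolding diff by linarith
  show ?thesis using fin_b unfolding Zeq[unfolded S_def m_def] A_def S_def m_def W_def EG_def c_def .
qed

locale setting =
  fixes M :: "nat \<Rightarrow> 'a measure"
    and k :: "nat \<Rightarrow> nat"
    and X F :: "nat \<Rightarrow> nat \<Rightarrow> 'a \<Rightarrow> real"
    and \<rho> :: real
  assumes k_inf: "filterlim k at_top sequentially"
    and k_n: "(\<lambda>n. real (k n) / real n) \<longlonglongrightarrow> 0"
    and prob: "\<And>n. prob_space (M n)"
    and X_exp: "\<And>n i. i < n \<Longrightarrow> distributed (M n) lborel (X n i) (exponential_density 1)"
    and X_indep: "\<And>n. prob_space.indep_vars (M n) (\<lambda>_. borel) (X n) {..<n}"
    and F_exp: "\<And>n j. j \<in> {1..k n - 1} \<Longrightarrow> distributed (M n) lborel (F n j) (exponential_density 1)"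
    and EF_indep: "\<And>n. prob_space.indep_vars (M n) (\<lambda>_. borel)
          (\<lambda>i \<omega>. if i = 0 then order_stat n (\<lambda>j. X n j \<omega>) (n - k n + 1) else F n i \<omega>)
          {0..k n - 1}"
    and rho: "\<rho> \<le> 0"
begin

definition "T n \<omega> = order_stat n (\<lambda>j. X n j \<omega>) (n - k n + 1)"
definition "Ysel n i \<omega> = (if i = 0 then T n \<omega> else F n i \<omega>)"
definition "Sf n \<omega> = (\<Sum>i\<in>{1..k n - 1}. F n i \<omega>)"
definition "Ap n \<omega> = (Sf n \<omega> - real (k n - 1)) / sqrt (real (k n - 1))"
definition "Zf n \<omega> = (let E = T n \<omega>;
               U = (1 / real (k n)) * (\<Sum>i = 1..k n - 1. Kfun \<rho> (1 + F n i \<omega> / E))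
           in sqrt (real (k n)) / sigma_fun \<rho> E * (U - mu_fun \<rho> E))"
definition "EGf t = integral\<^sup>L ExpM (gfun \<rho> t)"
definition "Wf n t \<omega> = (\<Sum>i\<in>{1..k n - 1}. (gfun \<rho> t (F n i \<omega>) - EGf t))"

lemma EF_indep': "prob_space.indep_vars (M n) (\<lambda>_. borel) (Ysel n) {0..k n - 1}"
  using EF_indep[of n] unfolding Ysel_def T_def .

lemma mT[measurable]: "T n \<in> borel_measurable (M n)"
proof -
  interpret prob_space "M n" by (rule prob)
  have "random_variable borel (Ysel n 0)" using EF_indep'[of n] unfolding indep_vars_def by auto
  moreover have "Ysel n 0 = T n" by (simp add: fun_eq_iff Ysel_def)
  ultimately show ?thesis by simp
qed

lemma mF[measurable]: "i \<in> {1..k n - 1} \<Longrightarrow> F n i \<in> borel_measurable (M n)"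
  using distributed_measurable[OF F_exp] by simp

lemma indF: "prob_space.indep_vars (M n) (\<lambda>_. borel) (F n) {1..k n - 1}"
proof -
  interpret prob_space "M n" by (rule prob)
  have "indep_vars (\<lambda>_. borel) (Ysel n) {1..k n - 1}"
    by (rule indep_vars_subset[OF EF_indep']) auto
  then show ?thesis by (rule indep_vars_cong[THEN iffD1, rotated 3]) (auto simp: Ysel_def)
qed

lemma mS[measurable]: "Sf n \<in> borel_measurable (M n)"
  unfolding Sf_def by (rule borel_measurable_sum) (rule mF)

lemma mAp[measurable]: "Ap n \<in> borel_measurable (M n)"
  unfolding Ap_def by measurable

lemma mZ[measurable]: "Zf n \<in> borel_measurable (M n)"
proof -
  have "(\<lambda>\<omega>. \<Sum>i = 1..k n - 1. Kfun \<rho> (1 + F n i \<omega> / T n \<omega>)) \<in> borel_measurable (M n)"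
    by (rule borel_measurable_sum) measurable
  then show ?thesis unfolding Zf_def Let_def by measurable
qed

lemma mEG[measurable]: "EGf \<in> borel_measurable borel"
  unfolding EGf_def[abs_def]
  by (rule sigma_finite_measure.borel_measurable_lebesgue_integral[OF prob_space_imp_sigma_finite[OF prob_Ex]])
     measurable

lemma S_dist: assumes "1 \<le> k n - 1" shows "distributed (M n) lborel (Sf n) (erlang_density (k n - 1 - 1) 1)"
proof -
  have "distributed (M n) lborel (\<lambda>x. \<Sum>i\<in>{1..k n - 1}. F n i x) (erlang_density (card {1..k n - 1} - 1) 1)"
    apply (rule prob_space.exponential_distributed_sum[OF prob])
        apply simp
    using assms apply simp
      apply simp
     apply (erule F_exp)
    by (rule indF)
  then show ?thesis by (simp add: Sf_def[abs_def])
qed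

lemma Ap_cdf: assumes "2 \<le> k n"
  shows "measure (M n) {\<omega>\<in>space (M n). Ap n \<omega> \<le> y} = EC (k n - 1) y"
proof -
  have D: "distributed (M n) lborel (Sf n) (erlang_density (k n - 1 - 1) 1)" using assms by (intro S_dist) auto
  have "measure (M n) {\<omega>\<in>space (M n). Ap n \<omega> \<le> y}
      = measure (M n) (Sf n -` {s. (s - real (k n - 1)) / sqrt (real (k n - 1)) \<le> y} \<inter> space (M n))"
    by (intro arg_cong[where f="measure (M n)"]) (auto simp: Ap_def)
  also have "\<dots> = measure (distr (M n) lborel (Sf n)) {s. (s - real (k n - 1)) / sqrt (real (k n - 1)) \<le> y}"
    by (subst measure_distr) auto
  also have "\<dots> = EC (k n - 1) y"
    unfolding distributed_distr_eq_density[OF D] EC_def by simp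
  finally show ?thesis .
qed

lemma k2: "eventually (\<lambda>n. Z \<le> k n) sequentially"
  using k_inf by (simp add: filterlim_at_top)

lemma Ap_conv: "(\<lambda>n. measure (M n) {\<omega>\<in>space (M n). Ap n \<omega> \<le> y}) \<longlonglongrightarrow> Phi y"
proof -
  have f: "filterlim (\<lambda>n. k n - 1) sequentially sequentially"
    unfolding filterlim_at_top
  proof
    fix Z show "eventually (\<lambda>n. Z \<le> k n - 1) sequentially"
      using k2[of "Z + 1"] by eventually_elim auto
  qed
  have "(\<lambda>n. EC (k n - 1) y) \<longlonglongrightarrow> Phi y"
    by (rule filterlim_compose[OF EC_conv f])
  then show ?thesis
    by (rule Lim_transform_eventually) (use k2[of 2] in \<open>auto elim!: eventually_mono simp: Ap_cdf\<close>)
qed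

lemma Ap_cheb: assumes "2 \<le> k n" "0 < L"
  shows "measure (M n) {\<omega>\<in>space (M n). L \<le> \<bar>Ap n \<omega>\<bar>} \<le> 1 / L\<^sup>2"
proof -
  interpret prob_space "M n" by (rule prob)
  define m where "m = k n - 1"
  have m: "1 \<le> m" using assms by (simp add: m_def)
  have D: "distributed (M n) lborel (Sf n) (erlang_density (m - 1) 1)" using m S_dist by (simp add: m_def)
  have ES: "expectation (Sf n) = real m"
    using erlang_ith_moment[OF _ D, of 1] m by (simp add: fact_reduce)
  have VS: "variance (Sf n) = real m"
    using erlang_distributed_variance[OF _ D] m by simp
  have sq: "integrable (M n) (\<lambda>x. Sf n x ^ 2)" using erlang_ith_moment_integrable[OF _ D, of 2] by simp
  have sm: "0 < sqrt (real m)" using m by simp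
  have "measure (M n) {\<omega>\<in>space (M n). L \<le> \<bar>Ap n \<omega>\<bar>} = prob {\<omega>\<in>space (M n). L * sqrt (real m) \<le> \<bar>Sf n \<omega> - expectation (Sf n)\<bar>}"
  proof -
    have "L \<le> \<bar>Ap n \<omega>\<bar> \<longleftrightarrow> L * sqrt (real m) \<le> \<bar>Sf n \<omega> - real m\<bar>" for \<omega>
      unfolding Ap_def m_def[symmetric] abs_divide using sm by (simp add: pos_le_divide_eq)
    then show ?thesis unfolding ES by (intro arg_cong[where f=prob]) auto
  qed
  also have "\<dots> \<le> variance (Sf n) / (L * sqrt (real m))\<^sup>2"
    by (rule Chebyshev_inequality) (use sq assms sm in auto)
  also have "\<dots> = 1 / L\<^sup>2" unfolding VS using m assms by (simp add: power_mult_distrib)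
  finally show ?thesis .
qed

end

context setting begin

lemma W_bound: assumes k: "2 \<le> k n" and t: "1 \<le> t" and D: "0 < D"
  shows "measure (M n) {\<omega>\<in>space (M n). D \<le> \<bar>Wf n t \<omega>\<bar>} \<le> real (k n - 1) * (6 * (1 - \<rho>)\<^sup>2 / t\<^sup>2) / D\<^sup>2"
proof -
  interpret prob_space "M n" by (rule prob)
  define I where "I = {1..k n - 1}"
  define e where "e = EGf t"
  define Zi where "Zi i \<omega> = gfun \<rho> t (F n i \<omega>) - e" for i \<omega>
  have t0: "0 < t" using t by simp
  have ge: "integral\<^sup>L ExpM (gfun \<rho> t) = e" by (simp add: e_def EGf_def)
  have hint: "integrable ExpM (\<lambda>v. (gfun \<rho> t v - e)\<^sup>2)"
  proof -
    have "integrable ExpM (\<lambda>v. (gfun \<rho> t v)\<^sup>2 + e\<^sup>2 - 2 * gfun \<rho> t v * e)"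
      using int_g2[OF rho t0] int_g[OF rho t0] by (intro Bochner_Integration.integrable_diff Bochner_Integration.integrable_add) auto
    then show ?thesis by (simp add: power2_diff)
  qed
  have hE: "integral\<^sup>L ExpM (\<lambda>v. (gfun \<rho> t v - e)\<^sup>2) = integral\<^sup>L ExpM (\<lambda>v. (gfun \<rho> t v)\<^sup>2) - e\<^sup>2"
  proof -
    have "integral\<^sup>L ExpM (\<lambda>v. (gfun \<rho> t v - e)\<^sup>2) = integral\<^sup>L ExpM (\<lambda>v. (gfun \<rho> t v)\<^sup>2 + e\<^sup>2 - 2 * gfun \<rho> t v * e)"
      by (simp add: power2_diff)
    also have "\<dots> = integral\<^sup>L ExpM (\<lambda>v. (gfun \<rho> t v)\<^sup>2) + e\<^sup>2 - 2 * e * e"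
      using int_g2[OF rho t0] int_g[OF rho t0] ge prob_space.prob_space[OF prob_Ex]
      by (simp add: Bochner_Integration.integral_diff Bochner_Integration.integral_add)
    finally show ?thesis by (simp add: power2_eq_square)
  qed
  have ind: "indep_vars (\<lambda>_. borel) Zi I"
    unfolding Zi_def[abs_def] I_def
    by (rule indep_vars_compose2[OF indF, where Y="\<lambda>i v. gfun \<rho> t v - e" and N="\<lambda>_. borel"]) measurable
  have sqi: "integrable (M n) (\<lambda>\<omega>. (Zi i \<omega>)\<^sup>2)" if i: "i \<in> I" for i
    using dist_int(2)[OF F_exp[of i n], of "\<lambda>v. (gfun \<rho> t v - e)\<^sup>2"] hint i unfolding I_def Zi_def by simp
  have E0: "integral\<^sup>L (M n) (Zi i) = 0" if i: "i \<in> I" for i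
  proof -
    have "integral\<^sup>L (M n) (Zi i) = integral\<^sup>L ExpM (\<lambda>v. gfun \<rho> t v - e)"
      using dist_int(1)[OF F_exp[of i n], of "\<lambda>v. gfun \<rho> t v - e"] i unfolding I_def Zi_def by simp
    also have "\<dots> = 0" using int_g[OF rho t0] ge prob_space.prob_space[OF prob_Ex] by simp
    finally show ?thesis .
  qed
  have E2: "integral\<^sup>L (M n) (\<lambda>\<omega>. (Zi i \<omega>)\<^sup>2) \<le> 6 * (1 - \<rho>)\<^sup>2 / t\<^sup>2" if i: "i \<in> I" for i
  proof -
    have "integral\<^sup>L (M n) (\<lambda>\<omega>. (Zi i \<omega>)\<^sup>2) = integral\<^sup>L ExpM (\<lambda>v. (gfun \<rho> t v - e)\<^sup>2)"
      using dist_int(1)[OF F_exp[of i n], of "\<lambda>v. (gfun \<rho> t v - e)\<^sup>2"] i unfolding I_def Zi_def by simp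
    also have "\<dots> \<le> integral\<^sup>L ExpM (\<lambda>v. (gfun \<rho> t v)\<^sup>2)" unfolding hE by simp
    also have "\<dots> \<le> 6 * (1 - \<rho>)\<^sup>2 / t\<^sup>2" by (rule Eg2_bound[OF rho t0])
    finally show ?thesis .
  qed
  have fin: "finite I" by (simp add: I_def)
  note ss = sum_sq_indep[OF prob fin ind sqi E0]
  define f where "f \<omega> = (\<Sum>i\<in>I. Zi i \<omega>)" for \<omega>
  have Wf_eq: "Wf n t \<omega> = f \<omega>" for \<omega> by (simp add: Wf_def f_def Zi_def I_def e_def)
  have rvZ: "i \<in> I \<Longrightarrow> random_variable borel (Zi i)" for i using ind unfolding indep_vars_def by blast
  have rvf[measurable]: "random_variable borel f" unfolding f_def by (rule borel_measurable_sum) (rule rvZ)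
  have intZ: "i \<in> I \<Longrightarrow> integrable (M n) (Zi i)" for i
    by (rule square_integrable_imp_integrable[OF rvZ]) (use sqi in auto)
  have Ef: "expectation f = 0" unfolding f_def using intZ E0 by (simp add: Bochner_Integration.integral_sum)
  have Ef2: "expectation (\<lambda>\<omega>. (f \<omega>)\<^sup>2) \<le> real (k n - 1) * (6 * (1 - \<rho>)\<^sup>2 / t\<^sup>2)"
  proof -
    have "expectation (\<lambda>\<omega>. (f \<omega>)\<^sup>2) = (\<Sum>i\<in>I. expectation (\<lambda>\<omega>. (Zi i \<omega>)\<^sup>2))" unfolding f_def by (rule ss(2))
    also have "\<dots> \<le> (\<Sum>i\<in>I. 6 * (1 - \<rho>)\<^sup>2 / t\<^sup>2)" by (rule sum_mono) (rule E2)
    also have "\<dots> = real (k n - 1) * (6 * (1 - \<rho>)\<^sup>2 / t\<^sup>2)" by (simp add: I_def)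
    finally show ?thesis .
  qed
  have "measure (M n) {\<omega>\<in>space (M n). D \<le> \<bar>Wf n t \<omega>\<bar>} = prob {\<omega>\<in>space (M n). \<bar>f \<omega> - expectation f\<bar> \<ge> D}"
    unfolding Wf_eq Ef by simp
  also have "\<dots> \<le> variance f / D\<^sup>2"
  proof (rule Chebyshev_inequality)
    show "integrable (M n) (\<lambda>\<omega>. (f \<omega>)\<^sup>2)" using ss(1) by (simp add: f_def)
  qed (use D rvf in auto)
  also have "variance f = expectation (\<lambda>\<omega>. (f \<omega>)\<^sup>2)" unfolding Ef by simp
  also have "\<dots> / D\<^sup>2 \<le> real (k n - 1) * (6 * (1 - \<rho>)\<^sup>2 / t\<^sup>2) / D\<^sup>2"
    by (rule divide_right_mono[OF Ef2]) simp
  finally show ?thesis .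
qed

end

context setting begin

lemma WT_bound: assumes k: "2 \<le> k n" and C: "1 \<le> C" and D: "0 < D"
  shows "measure (M n) {\<omega>\<in>space (M n). C < T n \<omega> \<and> D \<le> \<bar>Wf n (T n \<omega>) \<omega>\<bar>} \<le> real (k n - 1) * (6 * (1 - \<rho>)\<^sup>2 / C\<^sup>2) / D\<^sup>2"
proof -
  interpret prob_space "M n" by (rule prob)
  define I where "I = {1..k n - 1}"
  define S where "S = PiM {0::nat} (\<lambda>_. borel :: real measure)"
  define N where "N = PiM I (\<lambda>_. borel :: real measure)"
  define X' where "X' \<omega> = restrict (\<lambda>i. Ysel n i \<omega>) {0}" for \<omega>
  define Y' where "Y' \<omega> = restrict (\<lambda>i. Ysel n i \<omega>) I" for \<omega>
  define B where "B = real (k n - 1) * (6 * (1 - \<rho>)\<^sup>2 / C\<^sup>2) / D\<^sup>2"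
  define Pset where "Pset = {p \<in> space (S \<Otimes>\<^sub>M N). C < fst p 0 \<and> D \<le> \<bar>\<Sum>i\<in>I. (gfun \<rho> (fst p 0) (snd p i) - EGf (fst p 0))\<bar>}"
  have ind: "indep_var S X' N Y'"
    unfolding S_def N_def X'_def Y'_def I_def
    by (rule indep_var_restrict[OF EF_indep']) auto
  have Pm: "Pset \<in> sets (S \<Otimes>\<^sub>M N)"
    unfolding Pset_def S_def N_def by measurable
  have B: "0 \<le> B" by (simp add: B_def)
  have bnd: "measure (M n) {\<omega>\<in>space (M n). (x, Y' \<omega>) \<in> Pset} \<le> B" if x: "x \<in> space S" for x
  proof (cases "C < x 0")
    case True
    have sp: "(x, Y' \<omega>) \<in> space (S \<Otimes>\<^sub>M N)" for \<omega>
      using x by (auto simp: space_pair_measure N_def Y'_def space_PiM)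
    have "{\<omega>\<in>space (M n). (x, Y' \<omega>) \<in> Pset} = {\<omega>\<in>space (M n). D \<le> \<bar>Wf n (x 0) \<omega>\<bar>}"
      using True sp by (auto simp: Pset_def Wf_def Y'_def Ysel_def I_def)
    also have "measure (M n) \<dots> \<le> real (k n - 1) * (6 * (1 - \<rho>)\<^sup>2 / (x 0)\<^sup>2) / D\<^sup>2"
      by (rule W_bound[OF k _ D]) (use True C in auto)
    also have "\<dots> \<le> B" unfolding B_def
    proof (intro divide_right_mono mult_left_mono divide_left_mono)
      show "C\<^sup>2 \<le> (x 0)\<^sup>2" using True C by (intro power_mono) auto
    qed (use True C in auto)
    finally show ?thesis .
  next
    case False
    then have e: "{\<omega>\<in>space (M n). (x, Y' \<omega>) \<in> Pset} = {}" by (auto simp: Pset_def)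
    show ?thesis unfolding e using B by simp
  qed
  have "measure (M n) {\<omega>\<in>space (M n). (X' \<omega>, Y' \<omega>) \<in> Pset} \<le> B"
    by (rule indep_section_bound[OF prob ind Pm B bnd])
  moreover have "{\<omega>\<in>space (M n). C < T n \<omega> \<and> D \<le> \<bar>Wf n (T n \<omega>) \<omega>\<bar>} = {\<omega>\<in>space (M n). (X' \<omega>, Y' \<omega>) \<in> Pset}"
    by (auto simp: Pset_def Wf_def X'_def Y'_def Ysel_def I_def space_pair_measure S_def N_def space_PiM)
  ultimately show ?thesis by (simp add: B_def)
qed

end

context setting begin

lemma T_small: "0 \<le> C \<Longrightarrow> (\<lambda>n. measure (M n) {\<omega> \<in> space (M n). T n \<omega> \<le> C}) \<longlonglongrightarrow> 0"
  unfolding T_def by (rule T_large[OF k_inf k_n prob X_exp X_indep])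

lemma pointwise:
  assumes k: "2 \<le> k n" and C1: "1 \<le> C" and C2: "30 * (1 - \<rho>)\<^sup>2 \<le> C" and L: "0 < L"
    and CL: "30 * (1 - \<rho>)\<^sup>2 * L / C \<le> \<delta> / 6"
    and E3: "2 * L / real (k n) \<le> \<delta> / 6" and E4: "2 / sqrt (real (k n)) \<le> \<delta> / 6"
    and T: "C < T n \<omega>" and A: "\<bar>Ap n \<omega>\<bar> < L" and big: "\<delta> < \<bar>Zf n \<omega> - Ap n \<omega>\<bar>"
  shows "\<delta> * sqrt (real (k n)) / 4 \<le> \<bar>Wf n (T n \<omega>) \<omega>\<bar>"
proof -
  define t where "t = T n \<omega>"
  define c where "c = 1 - \<rho>"
  have c: "1 \<le> c" using rho by (simp add: c_def)
  have t: "C < t" using T by (simp add: t_def)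
  have card: "card {1..k n - 1} + 1 = k n" "1 \<le> card {1..k n - 1}" using k by auto
  have db: "\<bar>Zf n \<omega> - Ap n \<omega>\<bar> \<le> \<bar>Ap n \<omega>\<bar> * (2 / real (k n) + 30 * c\<^sup>2 / t)
        + 2 * \<bar>Wf n t \<omega>\<bar> / sqrt (real (k n)) + 2 / sqrt (real (k n))"
    using det_bound[OF rho _ _ _ card, of t "\<lambda>i. F n i \<omega>"] t C1 C2
    unfolding Zf_def Let_def Ap_def Sf_def Wf_def EGf_def t_def c_def by simp
  have ct: "30 * c\<^sup>2 / t \<le> 30 * c\<^sup>2 / C" using t C1 by (intro divide_left_mono) auto
  have "\<bar>Ap n \<omega>\<bar> * (2 / real (k n) + 30 * c\<^sup>2 / t) \<le> L * (2 / real (k n) + 30 * c\<^sup>2 / C)"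
    using A ct t C1 by (intro mult_mono) auto
  also have "\<dots> = 2 * L / real (k n) + 30 * c\<^sup>2 * L / C" by (simp add: field_simps)
  also have "\<dots> \<le> \<delta> / 3" using E3 CL by (simp add: c_def)
  finally have a1: "\<bar>Ap n \<omega>\<bar> * (2 / real (k n) + 30 * c\<^sup>2 / t) \<le> \<delta> / 3" .
  have "\<delta> / 2 < 2 * \<bar>Wf n t \<omega>\<bar> / sqrt (real (k n))" using db a1 E4 big by linarith
  then have "\<delta> * sqrt (real (k n)) / 4 < \<bar>Wf n t \<omega>\<bar>" using k by (simp add: field_simps)
  then show ?thesis by (simp add: t_def)
qed

lemma small: assumes d: "0 < \<delta>"
  shows "(\<lambda>n. measure (M n) {\<omega>\<in>space (M n). \<delta> < \<bar>Zf n \<omega> - Ap n \<omega>\<bar>}) \<longlonglongrightarrow> 0"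
proof (rule order_tendstoI)
  fix a :: real assume "a < 0"
  then show "eventually (\<lambda>n. a < measure (M n) {\<omega>\<in>space (M n). \<delta> < \<bar>Zf n \<omega> - Ap n \<omega>\<bar>}) sequentially"
    by (intro always_eventually allI) (smt (verit) measure_nonneg)
next
  fix e :: real assume e: "0 < e"
  define c where "c = 1 - \<rho>"
  have c: "1 \<le> c" using rho by (simp add: c_def)
  define L where "L = sqrt (3 / e)"
  have L: "0 < L" "1 / L\<^sup>2 = e / 3" using e by (auto simp: L_def)
  define C where "C = max 1 (max (30 * c\<^sup>2) (max (180 * c\<^sup>2 * L / \<delta>) (288 * c\<^sup>2 / (\<delta>\<^sup>2 * e))))"
  have C: "1 \<le> C" "30 * c\<^sup>2 \<le> C" "180 * c\<^sup>2 * L / \<delta> \<le> C" "288 * c\<^sup>2 / (\<delta>\<^sup>2 * e) \<le> C"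
    by (auto simp: C_def)
  have C0: "0 < C" using C by simp
  have CL: "30 * c\<^sup>2 * L / C \<le> \<delta> / 6"
    using C(3) C0 d by (simp add: field_simps)
  have Cq: "96 * c\<^sup>2 / (C\<^sup>2 * \<delta>\<^sup>2) \<le> e / 3"
  proof -
    have "96 * c\<^sup>2 / (C\<^sup>2 * \<delta>\<^sup>2) \<le> 96 * c\<^sup>2 / (C * \<delta>\<^sup>2)"
      using C(1) d by (intro divide_left_mono mult_right_mono) (auto simp: power2_eq_square)
    also have "\<dots> \<le> e / 3" using C(4) C0 d e by (simp add: field_simps)
    finally show ?thesis .
  qed
  have E1: "eventually (\<lambda>n. measure (M n) {\<omega> \<in> space (M n). T n \<omega> \<le> C} < e / 3) sequentially"
    using T_small[of C] C0 e by (intro order_tendstoD) auto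
  define K where "K = nat \<lceil>12 * L / \<delta> + 144 / \<delta>\<^sup>2\<rceil> + 2"
  have E2: "eventually (\<lambda>n. K \<le> k n) sequentially" by (rule k2)
  show "eventually (\<lambda>n. measure (M n) {\<omega>\<in>space (M n). \<delta> < \<bar>Zf n \<omega> - Ap n \<omega>\<bar>} < e) sequentially"
    using E1 E2
  proof eventually_elim
    case (elim n)
    interpret prob_space "M n" by (rule prob)
    have kK: "12 * L / \<delta> + 144 / \<delta>\<^sup>2 \<le> real (k n)" "2 \<le> k n"
      using elim(2) unfolding K_def by linarith+
    have kpos: "0 < real (k n)" using kK by simp
    have E3: "2 * L / real (k n) \<le> \<delta> / 6"
    proof -
      have "12 * L / \<delta> \<le> real (k n)" using kK L d by (smt (verit) divide_nonneg_nonneg zero_le_power2)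
      then show ?thesis using d kpos L by (simp add: field_simps)
    qed
    have E4: "2 / sqrt (real (k n)) \<le> \<delta> / 6"
    proof -
      have "144 / \<delta>\<^sup>2 \<le> real (k n)" using kK L d by (smt (verit) divide_nonneg_nonneg)
      then have "(12 / \<delta>)\<^sup>2 \<le> real (k n)" by (simp add: power_divide)
      then have "12 / \<delta> \<le> sqrt (real (k n))" using d by (simp add: real_le_rsqrt)
      then show ?thesis using d kpos by (simp add: field_simps)
    qed
    define D where "D = \<delta> * sqrt (real (k n)) / 4"
    have D: "0 < D" using d kpos by (simp add: D_def)
    have mW: "(\<lambda>\<omega>. Wf n (T n \<omega>) \<omega>) \<in> borel_measurable (M n)"
      unfolding Wf_def
    proof (rule borel_measurable_sum)
      fix i assume i: "i \<in> {1..k n - 1}"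
      have p: "(\<lambda>\<omega>. (T n \<omega>, F n i \<omega>)) \<in> measurable (M n) (borel \<Otimes>\<^sub>M borel)"
        using mT mF[OF i] by (rule measurable_Pair)
      have g: "(\<lambda>\<omega>. gfun \<rho> (T n \<omega>) (F n i \<omega>)) \<in> borel_measurable (M n)"
        using measurable_compose[OF p gfun_meas[of \<rho>]] by simp
      have e: "(\<lambda>\<omega>. EGf (T n \<omega>)) \<in> borel_measurable (M n)"
        using measurable_compose[OF mT mEG] by simp
      show "(\<lambda>\<omega>. gfun \<rho> (T n \<omega>) (F n i \<omega>) - EGf (T n \<omega>)) \<in> borel_measurable (M n)"
        using g e by (rule borel_measurable_diff)
    qed
    have m1: "{\<omega>\<in>space (M n). T n \<omega> \<le> C} \<in> sets (M n)" using mT by measurable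
    have m2: "{\<omega>\<in>space (M n). L \<le> \<bar>Ap n \<omega>\<bar>} \<in> sets (M n)" using mAp by measurable
    have m3: "{\<omega>\<in>space (M n). C < T n \<omega> \<and> D \<le> \<bar>Wf n (T n \<omega>) \<omega>\<bar>} \<in> sets (M n)"
    proof -
      have "{\<omega>\<in>space (M n). C < T n \<omega> \<and> D \<le> \<bar>Wf n (T n \<omega>) \<omega>\<bar>} =
          {\<omega>\<in>space (M n). C < T n \<omega>} \<inter> {\<omega>\<in>space (M n). D \<le> \<bar>Wf n (T n \<omega>) \<omega>\<bar>}" by auto
      moreover have "{\<omega>\<in>space (M n). C < T n \<omega>} \<in> sets (M n)" using mT by measurable
      moreover have "{\<omega>\<in>space (M n). D \<le> \<bar>Wf n (T n \<omega>) \<omega>\<bar>} \<in> sets (M n)"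
      proof -
        define h where "h \<omega> = \<bar>Wf n (T n \<omega>) \<omega>\<bar>" for \<omega>
        have mh[measurable]: "h \<in> borel_measurable (M n)" unfolding h_def using mW by measurable
        have "{\<omega>\<in>space (M n). D \<le> h \<omega>} \<in> sets (M n)" by measurable
        then show ?thesis by (simp add: h_def)
      qed
      ultimately show ?thesis by auto
    qed
    have sub: "{\<omega>\<in>space (M n). \<delta> < \<bar>Zf n \<omega> - Ap n \<omega>\<bar>} \<subseteq>
        ({\<omega>\<in>space (M n). T n \<omega> \<le> C} \<union> {\<omega>\<in>space (M n). L \<le> \<bar>Ap n \<omega>\<bar>}) \<union>
        {\<omega>\<in>space (M n). C < T n \<omega> \<and> D \<le> \<bar>Wf n (T n \<omega>) \<omega>\<bar>}"
    proof clarify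
      fix \<omega> assume \<omega>: "\<omega> \<in> space (M n)" "\<delta> < \<bar>Zf n \<omega> - Ap n \<omega>\<bar>"
        and nW: "\<not> (C < T n \<omega> \<and> D \<le> \<bar>Wf n (T n \<omega>) \<omega>\<bar>)"
        and nA: "\<not> L \<le> \<bar>Ap n \<omega>\<bar>"
      show "T n \<omega> \<le> C"
      proof (rule ccontr)
        assume "\<not> T n \<omega> \<le> C"
        then have T: "C < T n \<omega>" by simp
        have "D \<le> \<bar>Wf n (T n \<omega>) \<omega>\<bar>" unfolding D_def
          by (rule pointwise[OF kK(2) C(1) C(2)[unfolded c_def] L(1) CL[unfolded c_def] E3 E4 T]) (use nA \<omega> in auto)
        then show False using nW T by simp
      qed
    qed
    have "measure (M n) {\<omega>\<in>space (M n). \<delta> < \<bar>Zf n \<omega> - Ap n \<omega>\<bar>}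
        \<le> measure (M n) (({\<omega>\<in>space (M n). T n \<omega> \<le> C} \<union> {\<omega>\<in>space (M n). L \<le> \<bar>Ap n \<omega>\<bar>}) \<union>
        {\<omega>\<in>space (M n). C < T n \<omega> \<and> D \<le> \<bar>Wf n (T n \<omega>) \<omega>\<bar>})"
      by (rule finite_measure_mono[OF sub]) (intro sets.Un m1 m2 m3)
    also have "\<dots> \<le> (measure (M n) {\<omega>\<in>space (M n). T n \<omega> \<le> C} + measure (M n) {\<omega>\<in>space (M n). L \<le> \<bar>Ap n \<omega>\<bar>})
        + measure (M n) {\<omega>\<in>space (M n). C < T n \<omega> \<and> D \<le> \<bar>Wf n (T n \<omega>) \<omega>\<bar>}"
    proof -
      have "measure (M n) (({\<omega>\<in>space (M n). T n \<omega> \<le> C} \<union> {\<omega>\<in>space (M n). L \<le> \<bar>Ap n \<omega>\<bar>}) \<union>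
        {\<omega>\<in>space (M n). C < T n \<omega> \<and> D \<le> \<bar>Wf n (T n \<omega>) \<omega>\<bar>})
        \<le> measure (M n) ({\<omega>\<in>space (M n). T n \<omega> \<le> C} \<union> {\<omega>\<in>space (M n). L \<le> \<bar>Ap n \<omega>\<bar>}) +
           measure (M n) {\<omega>\<in>space (M n). C < T n \<omega> \<and> D \<le> \<bar>Wf n (T n \<omega>) \<omega>\<bar>}"
        by (rule measure_subadditive) (use m3 in auto)
      moreover have "measure (M n) ({\<omega>\<in>space (M n). T n \<omega> \<le> C} \<union> {\<omega>\<in>space (M n). L \<le> \<bar>Ap n \<omega>\<bar>})
        \<le> measure (M n) {\<omega>\<in>space (M n). T n \<omega> \<le> C} + measure (M n) {\<omega>\<in>space (M n). L \<le> \<bar>Ap n \<omega>\<bar>}"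
        by (rule measure_subadditive) auto
      ultimately show ?thesis by linarith
    qed
    also have "\<dots> < e / 3 + e / 3 + e / 3"
    proof -
      have "measure (M n) {\<omega>\<in>space (M n). L \<le> \<bar>Ap n \<omega>\<bar>} \<le> e / 3"
        using Ap_cheb[OF kK(2) L(1)] L(2) by simp
      moreover have "measure (M n) {\<omega>\<in>space (M n). C < T n \<omega> \<and> D \<le> \<bar>Wf n (T n \<omega>) \<omega>\<bar>} \<le> e / 3"
      proof -
        have "measure (M n) {\<omega>\<in>space (M n). C < T n \<omega> \<and> D \<le> \<bar>Wf n (T n \<omega>) \<omega>\<bar>}
            \<le> real (k n - 1) * (6 * c\<^sup>2 / C\<^sup>2) / D\<^sup>2"
          using WT_bound[OF kK(2) C(1) D] by (simp add: c_def)
        also have "\<dots> = 96 * c\<^sup>2 / (C\<^sup>2 * \<delta>\<^sup>2) * (real (k n - 1) / real (k n))"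
          using kpos d C0 by (simp add: D_def power_mult_distrib power_divide field_simps)
        also have "\<dots> \<le> 96 * c\<^sup>2 / (C\<^sup>2 * \<delta>\<^sup>2) * 1"
          using kpos by (intro mult_left_mono) auto
        also have "\<dots> \<le> e / 3" using Cq by simp
        finally show ?thesis .
      qed
      ultimately show ?thesis using elim(1) by linarith
    qed
    finally show ?case by simp
  qed
qed

theorem main: "weak_conv_m
     (\<lambda>n. distr (M n) borel
        (\<lambda>\<omega>. let E = order_stat n (\<lambda>j. X n j \<omega>) (n - k n + 1);
               U = (1 / real (k n)) * (\<Sum>i = 1..k n - 1. Kfun \<rho> (1 + F n i \<omega> / E))
           in sqrt (real (k n)) / sigma_fun \<rho> E * (U - mu_fun \<rho> E)))
     std_normal_distribution"
proof -
  have eq: "(\<lambda>\<omega>. let E = order_stat n (\<lambda>j. X n j \<omega>) (n - k n + 1);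
               U = (1 / real (k n)) * (\<Sum>i = 1..k n - 1. Kfun \<rho> (1 + F n i \<omega> / E))
           in sqrt (real (k n)) / sigma_fun \<rho> E * (U - mu_fun \<rho> E)) = Zf n" for n
    by (simp add: fun_eq_iff Zf_def T_def)
  have cdfeq: "cdf (distr (M n) borel (Zf n)) x = measure (M n) {\<omega>\<in>space (M n). Zf n \<omega> \<le> x}" for n x
    unfolding cdf_def by (subst measure_distr) (auto intro!: arg_cong[where f="measure (M n)"])
  have "(\<lambda>n. measure (M n) {\<omega>\<in>space (M n). Zf n \<omega> \<le> x}) \<longlonglongrightarrow> Phi x" for x
    by (rule slutsky[OF prob mAp mZ Ap_conv small])
  then show ?thesis unfolding eq weak_conv_m_def weak_conv_def cdfeq Phi_def by blast
qed

end

theorem lemma6: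
  fixes M :: "nat \<Rightarrow> 'a measure"
    and k :: "nat \<Rightarrow> nat"
    and X F :: "nat \<Rightarrow> nat \<Rightarrow> 'a \<Rightarrow> real"
    and \<rho> :: real
  assumes k_inf: "filterlim k at_top sequentially"
    and k_n: "(\<lambda>n. real (k n) / real n) \<longlonglongrightarrow> 0"
    and prob: "\<And>n. prob_space (M n)"
    and X_exp: "\<And>n i. i < n \<Longrightarrow> distributed (M n) lborel (X n i) (exponential_density 1)"
    and X_indep: "\<And>n. prob_space.indep_vars (M n) (\<lambda>_. borel) (X n) {..<n}"
    and F_exp: "\<And>n j. j \<in> {1..k n - 1} \<Longrightarrow> distributed (M n) lborel (F n j) (exponential_density 1)"
    and EF_indep: "\<And>n. prob_space.indep_vars (M n) (\<lambda>_. borel)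
          (\<lambda>i \<omega>. if i = 0 then order_stat n (\<lambda>j. X n j \<omega>) (n - k n + 1) else F n i \<omega>)
          {0..k n - 1}"
    and rho: "\<rho> \<le> 0"
  shows "weak_conv_m
     (\<lambda>n. distr (M n) borel
        (\<lambda>\<omega>. let E = order_stat n (\<lambda>j. X n j \<omega>) (n - k n + 1);
               U = (1 / real (k n)) * (\<Sum>i = 1..k n - 1. Kfun \<rho> (1 + F n i \<omega> / E))
           in sqrt (real (k n)) / sigma_fun \<rho> E * (U - mu_fun \<rho> E)))
     std_normal_distribution"
  proof -
  interpret setting M k X F \<rho>
    by (rule setting.intro[OF k_inf k_n prob X_exp X_indep F_exp EF_indep rho])
  show ?thesis by (rule main)
qed

end
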